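(* Let $\mathcal A_1,\mathcal B_1:U_1\to V_1$ be surjective linear maps of finite-dimensional vector spaces over a field $\mathbb F$. Let $U_2=U_1/\operatorname{Ker}\mathcal B_1$, $V_2=V_1/\mathcal A_1(\operatorname{Ker}\mathcal B_1)$, and let $\mathcal A_2,\mathcal B_2:U_2\to V_2$ be the maps induced by $\mathcal A_1,\mathcal B_1$; similarly let $U_3=U_2/\operatorname{Ker}\mathcal B_2$. Let $(A_1,B_1)$ and $(A_2,B_2)$ be the matrix pairs of $(\mathcal A_1,\mathcal B_1)$ and $(\mathcal A_2,\mathcal B_2)$ in arbitrary bases, and take any regularizing decomposition of $(A_1,B_1)$. Then a regularizing decomposition of $(A_2,B_2)$ is obtained from it by deleting all summands $(L_1,R_1)=(0_{01},0_{01})$, replacing each summand $(L_k,R_k)$ with $k\ge2$ by $(L_{k-1},R_{k-1})$, and leaving the regular part unchanged. The number of summands $(L_1,R_1)$ in the decomposition of $(A_1,B_1)$ equals $\dim U_1-2\dim U_2+\dim U_3$.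
   Context: $J_k(0)$ denotes the $k\times k$ nilpotent Jordan block with ones directly below the diagonal. $L_k$ and $R_k$ are the $(k-1)\times k$ matrices obtained from $I_k$ by deleting its last row, respectively its first row ($L_1=R_1=0_{01}$ is the $0\times1$ matrix). Direct sums of matrix pairs are blockwise. Two matrix pairs $(A,B)$, $(A',B')$ are equivalent if $SA=A'R$, $SB=B'R$ for nonsingular $S,R$. A regularizing decomposition of a matrix pair $(A,B)$ is a direct sum $(I_r,D)\oplus(M_1,N_1)\oplus\dots\oplus(M_t,N_t)$ equivalent to $(A,B)$, in which $D$ is $r\times r$ nonsingular (the regular part is $(I_r,D)$) and each $(M_i,N_i)$ is one of $(I_k,J_k(0))$, $(J_k(0),I_k)$, $(L_k,R_k)$, $(L_k^T,R_k^T)$, $k\ge1$. *)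

theory Defs
  imports "Jordan_Normal_Form.Matrix"
begin

definition Jblk :: "nat \<Rightarrow> 'a::field mat" where
  "Jblk k = mat k k (\<lambda>(i,j). if i = Suc j then 1 else 0)"

definition Lblk :: "nat \<Rightarrow> 'a::field mat" where
  "Lblk k = mat (k - 1) k (\<lambda>(i,j). if j = i then 1 else 0)"

definition Rblk :: "nat \<Rightarrow> 'a::field mat" where
  "Rblk k = mat (k - 1) k (\<lambda>(i,j). if j = Suc i then 1 else 0)"

datatype blk = IJ nat | JI nat | LR nat | LRT nat

fun blk_size :: "blk \<Rightarrow> nat" where
  "blk_size (IJ k) = k" | "blk_size (JI k) = k" | "blk_size (LR k) = k" | "blk_size (LRT k) = k"

fun blk_pair :: "blk \<Rightarrow> 'a::field mat \<times> 'a mat" where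
  "blk_pair (IJ k) = (1\<^sub>m k, Jblk k)"
| "blk_pair (JI k) = (Jblk k, 1\<^sub>m k)"
| "blk_pair (LR k) = (Lblk k, Rblk k)"
| "blk_pair (LRT k) = (transpose_mat (Lblk k), transpose_mat (Rblk k))"

definition dsum :: "'a::field mat \<Rightarrow> 'a mat \<Rightarrow> 'a mat" where
  "dsum A B = four_block_mat A (0\<^sub>m (dim_row A) (dim_col B)) (0\<^sub>m (dim_row B) (dim_col A)) B"

definition dsum_pair :: "'a::field mat \<times> 'a mat \<Rightarrow> 'a mat \<times> 'a mat \<Rightarrow> 'a mat \<times> 'a mat" where
  "dsum_pair P Q = (dsum (fst P) (fst Q), dsum (snd P) (snd Q))"

definition decomp_pair :: "nat \<Rightarrow> 'a::field mat \<Rightarrow> blk list \<Rightarrow> 'a mat \<times> 'a mat" where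
  "decomp_pair r D bs = foldl (\<lambda>P b. dsum_pair P (blk_pair b)) (1\<^sub>m r, D) bs"

definition pair_equiv :: "'a::field mat \<Rightarrow> 'a mat \<Rightarrow> 'a mat \<Rightarrow> 'a mat \<Rightarrow> bool" where
  "pair_equiv A B A' B' \<longleftrightarrow>
     dim_row B = dim_row A \<and> dim_col B = dim_col A \<and>
     A' \<in> carrier_mat (dim_row A) (dim_col A) \<and> B' \<in> carrier_mat (dim_row A) (dim_col A) \<and>
     (\<exists>S R. S \<in> carrier_mat (dim_row A) (dim_row A) \<and> R \<in> carrier_mat (dim_col A) (dim_col A) \<and>
        invertible_mat S \<and> invertible_mat R \<and> S * A = A' * R \<and> S * B = B' * R)"

definition reg_decomp :: "'a::field mat \<Rightarrow> 'a mat \<Rightarrow> nat \<Rightarrow> 'a mat \<Rightarrow> blk list \<Rightarrow> bool" where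
  "reg_decomp A B r D bs \<longleftrightarrow>
     D \<in> carrier_mat r r \<and> invertible_mat D \<and> (\<forall>b\<in>set bs. 1 \<le> blk_size b) \<and>
     pair_equiv A B (fst (decomp_pair r D bs)) (snd (decomp_pair r D bs))"

fun shrink_blk :: "blk \<Rightarrow> blk" where
  "shrink_blk (LR k) = LR (k - 1)"
| "shrink_blk b = b"

definition lc :: "nat \<Rightarrow> (nat \<Rightarrow> 'a::field) \<Rightarrow> 'a vec list \<Rightarrow> 'a vec" where
  "lc n c us = foldr (\<lambda>i acc. c i \<cdot>\<^sub>v (us ! i) + acc) [0..<length us] (0\<^sub>v n)"

text \<open>qbasis n W us: the classes of us (vectors of F^n) form a basis of the quotient F^n / W.\<close>

definition qbasis :: "nat \<Rightarrow> 'a::field vec set \<Rightarrow> 'a vec list \<Rightarrow> bool" where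
  "qbasis n W us \<longleftrightarrow>
     set us \<subseteq> carrier_vec n \<and>
     (\<forall>c. lc n c us \<in> W \<longrightarrow> (\<forall>i<length us. c i = 0)) \<and>
     (\<forall>u\<in>carrier_vec n. \<exists>c. u - lc n c us \<in> W)"

definition surj_mat :: "'a::field mat \<Rightarrow> bool" where
  "surj_mat A \<longleftrightarrow> (\<forall>y\<in>carrier_vec (dim_row A). \<exists>x\<in>carrier_vec (dim_col A). A *\<^sub>v x = y)"

text \<open>(M2 in bases us of U/K, vs of V/W) is the matrix of the map U/K \<rightarrow> V/W induced by M:
  M us_j \<equiv> sum_i M2_ij vs_i  (mod W).\<close>

definition induced_mat :: "nat \<Rightarrow> 'a::field mat \<Rightarrow> 'a vec set \<Rightarrow> 'a vec list \<Rightarrow> 'a vec list \<Rightarrow> 'a mat \<Rightarrow> bool" where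
  "induced_mat m M W us vs M2 \<longleftrightarrow>
     M2 \<in> carrier_mat (length vs) (length us) \<and>
     (\<forall>j<length us. M *\<^sub>v (us ! j) - lc m (\<lambda>i. M2 $$ (i,j)) vs \<in> W)"

end

theory Submission
  imports Defs "Jordan_Normal_Form.Determinant"
begin


lemma lc_gen:
  assumes "set us \<subseteq> carrier_vec n" "\<forall>i\<in>set ix. i < length us"
  shows "foldr (\<lambda>i acc. c i \<cdot>\<^sub>v (us ! i) + acc) ix (0\<^sub>v n) = vec n (\<lambda>t. \<Sum>i\<leftarrow>ix. c i * (us!i) $ t)"
  using assms(2)
proof (induction ix)
  case Nil then show ?case by (auto intro!: eq_vecI)
next
  case (Cons i ix)
  have ui: "us ! i \<in> carrier_vec n" using assms(1) Cons.prems by auto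
  show ?case using Cons ui by (auto intro!: eq_vecI)
qed

lemma lc_mat:
  assumes "set us \<subseteq> carrier_vec n"
  shows "lc n c us = mat_of_cols n us *\<^sub>v vec (length us) c"
proof -
  have "lc n c us = vec n (\<lambda>t. \<Sum>i\<leftarrow>[0..<length us]. c i * (us!i) $ t)"
    unfolding lc_def by (rule lc_gen[OF assms], auto)
  also have "\<dots> = mat_of_cols n us *\<^sub>v vec (length us) c"
    by (rule eq_vecI, auto simp: scalar_prod_def mat_of_cols_index sum_list_sum_nth mult.commute intro!: sum.cong)
  finally show ?thesis .
qed

definition inK :: "'a::field vec set \<Rightarrow> 'a mat \<Rightarrow> bool" where
  "inK K X \<longleftrightarrow> (\<forall>c\<in>carrier_vec (dim_col X). X *\<^sub>v c \<in> K)"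

definition lincl :: "nat \<Rightarrow> 'a::field vec set \<Rightarrow> bool" where
  "lincl n K \<longleftrightarrow> K \<subseteq> carrier_vec n \<and> 0\<^sub>v n \<in> K \<and>
     (\<forall>x\<in>K. \<forall>y\<in>K. x + y \<in> K) \<and> (\<forall>x\<in>K. \<forall>y\<in>K. x - y \<in> K) \<and>
     (\<forall>X k. X \<in> carrier_mat n k \<longrightarrow> (\<forall>j<k. col X j \<in> K) \<longrightarrow> inK K X)"

definition qb :: "'a::field vec set \<Rightarrow> 'a mat \<Rightarrow> bool" where
  "qb K U \<longleftrightarrow> (\<forall>c\<in>carrier_vec (dim_col U). U *\<^sub>v c \<in> K \<longrightarrow> c = 0\<^sub>v (dim_col U)) \<and>
     (\<forall>u\<in>carrier_vec (dim_row U). \<exists>c\<in>carrier_vec (dim_col U). u - U *\<^sub>v c \<in> K)"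

definition kerS :: "'a::field mat \<Rightarrow> 'a vec set" where
  "kerS B = {x \<in> carrier_vec (dim_col B). B *\<^sub>v x = 0\<^sub>v (dim_row B)}"

definition imS :: "'a::field mat \<Rightarrow> 'a mat \<Rightarrow> 'a vec set" where
  "imS A B = (\<lambda>x. A *\<^sub>v x) ` kerS B"

definition preS :: "'a::field mat \<Rightarrow> 'a vec set \<Rightarrow> 'a vec set" where
  "preS B W = {x \<in> carrier_vec (dim_col B). B *\<^sub>v x \<in> W}"

lemma mat_unit_col: "(X::'a::field mat) \<in> carrier_mat a b \<Longrightarrow> j < b \<Longrightarrow> X *\<^sub>v unit_vec b j = col X j"
  by (rule eq_vecI, auto simp: scalar_prod_right_unit)

lemma mat_eq_by_vec:
  fixes X Y :: "'a::field mat"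
  assumes "X \<in> carrier_mat a b" "Y \<in> carrier_mat a b" "\<And>c. c \<in> carrier_vec b \<Longrightarrow> X *\<^sub>v c = Y *\<^sub>v c"
  shows "X = Y"
proof (rule eq_matI)
  fix i j assume ij: "i < dim_row Y" "j < dim_col Y"
  have "col X j = col Y j" using assms(3)[of "unit_vec b j"] mat_unit_col[OF assms(1)] mat_unit_col[OF assms(2)] ij assms(2) by auto
  hence "col X j $ i = col Y j $ i" by simp
  thus "X $$ (i, j) = Y $$ (i, j)" using ij assms(1,2) by auto
qed (insert assms, auto)

lemma linclD:
  assumes "lincl n K"
  shows "K \<subseteq> carrier_vec n" "0\<^sub>v n \<in> K" "x \<in> K \<Longrightarrow> y \<in> K \<Longrightarrow> x + y \<in> K"
    "x \<in> K \<Longrightarrow> y \<in> K \<Longrightarrow> x - y \<in> K"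
    "X \<in> carrier_mat n k \<Longrightarrow> (\<And>j. j < k \<Longrightarrow> col X j \<in> K) \<Longrightarrow> inK K X"
  using assms unfolding lincl_def by blast+

lemma zero_mat_mult_vec: "(c::'a::field vec) \<in> carrier_vec k \<Longrightarrow> 0\<^sub>m m k *\<^sub>v c = 0\<^sub>v m"
  by (rule eq_vecI, auto simp: scalar_prod_def)

lemma mat_mult_zero_vec: "(A::'a::field mat) \<in> carrier_mat m n \<Longrightarrow> A *\<^sub>v 0\<^sub>v n = 0\<^sub>v m"
  by (rule eq_vecI, auto simp: scalar_prod_def)

lemma lincl_kerS:
  fixes B :: "'a::field mat"
  assumes B: "B \<in> carrier_mat m n"
  shows "lincl n (kerS B)"
  unfolding lincl_def
proof (intro conjI allI impI ballI)
  show "kerS B \<subseteq> carrier_vec n" using B unfolding kerS_def by auto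
  show "0\<^sub>v n \<in> kerS B" using B mat_mult_zero_vec[OF B] unfolding kerS_def by auto
  fix x y assume x: "x \<in> kerS B" and y: "y \<in> kerS B"
  hence xc: "x \<in> carrier_vec n" and yc: "y \<in> carrier_vec n" and bx: "B *\<^sub>v x = 0\<^sub>v m" and "B *\<^sub>v y = 0\<^sub>v m"
    using B unfolding kerS_def by auto
  then show "x + y \<in> kerS B" "x - y \<in> kerS B" using B
    unfolding kerS_def by (auto simp: mult_add_distrib_mat_vec[OF B] mult_minus_distrib_mat_vec[OF B])
next
  fix X :: "'a mat" and k assume X: "X \<in> carrier_mat n k" and cols: "\<forall>j<k. col X j \<in> kerS B"
  have BX: "B * X = 0\<^sub>m m k"
  proof (rule eq_matI)
    fix i j assume ij: "i < dim_row (0\<^sub>m m k :: 'a mat)" "j < dim_col (0\<^sub>m m k :: 'a mat)"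
    have "B *\<^sub>v col X j = 0\<^sub>v m" using cols ij B unfolding kerS_def by auto
    hence "(B *\<^sub>v col X j) $ i = 0" using ij by simp
    thus "(B * X) $$ (i, j) = 0\<^sub>m m k $$ (i, j)" using ij B X by auto
  qed (insert B X, auto)
  show "inK (kerS B) X" unfolding inK_def
  proof
    fix c :: "'a vec" assume c: "c \<in> carrier_vec (dim_col X)"
    hence c': "c \<in> carrier_vec k" using X by auto
    have "B *\<^sub>v (X *\<^sub>v c) = (B * X) *\<^sub>v c" using B X c' by auto
    also have "\<dots> = 0\<^sub>v m" using BX zero_mat_mult_vec[OF c'] by simp
    finally show "X *\<^sub>v c \<in> kerS B" using B X c' unfolding kerS_def by auto
  qed
qed

lemma lincl_imS:
  fixes A B :: "'a::field mat"
  assumes A: "A \<in> carrier_mat m n" and B: "B \<in> carrier_mat m' n"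
  shows "lincl m (imS A B)"
  unfolding lincl_def
proof (intro conjI allI impI ballI)
  show "imS A B \<subseteq> carrier_vec m" using A B unfolding imS_def kerS_def by auto
  have "0\<^sub>v n \<in> kerS B" using linclD(2)[OF lincl_kerS[OF B]] .
  hence "A *\<^sub>v 0\<^sub>v n \<in> imS A B" unfolding imS_def by blast
  thus "0\<^sub>v m \<in> imS A B" using mat_mult_zero_vec[OF A] by simp
  fix x y assume x: "x \<in> imS A B" and y: "y \<in> imS A B"
  then obtain a b where a: "a \<in> kerS B" "x = A *\<^sub>v a" and b: "b \<in> kerS B" "y = A *\<^sub>v b"
    unfolding imS_def by auto
  have ac: "a \<in> carrier_vec n" "b \<in> carrier_vec n" using a b B unfolding kerS_def by auto
  have "x + y = A *\<^sub>v (a + b)" using a b ac by (simp add: mult_add_distrib_mat_vec[OF A])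
  moreover have "a + b \<in> kerS B" using linclD(3)[OF lincl_kerS[OF B] a(1) b(1)] .
  ultimately show "x + y \<in> imS A B" unfolding imS_def by blast
  have "x - y = A *\<^sub>v (a - b)" using a b ac by (simp add: mult_minus_distrib_mat_vec[OF A])
  moreover have "a - b \<in> kerS B" using linclD(4)[OF lincl_kerS[OF B] a(1) b(1)] .
  ultimately show "x - y \<in> imS A B" unfolding imS_def by blast
next
  fix X :: "'a mat" and k assume X: "X \<in> carrier_mat m k" and cols: "\<forall>j<k. col X j \<in> imS A B"
  have "\<forall>j<k. \<exists>z. z \<in> kerS B \<and> col X j = A *\<^sub>v z" using cols unfolding imS_def by auto
  then obtain z where z: "\<And>j. j < k \<Longrightarrow> z j \<in> kerS B \<and> col X j = A *\<^sub>v z j" by metis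
  define Z where "Z = mat_of_cols n (map z [0..<k])"
  have Z: "Z \<in> carrier_mat n k" unfolding Z_def by auto
  have zc: "\<And>j. j < k \<Longrightarrow> col Z j = z j" unfolding Z_def
    using z B by (auto simp: kerS_def)
  have XAZ: "X = A * Z"
  proof (rule eq_matI)
    fix i j assume ij: "i < dim_row (A * Z)" "j < dim_col (A * Z)"
    hence ij': "i < m" "j < k" using A Z by auto
    have "(A * Z) $$ (i,j) = (A *\<^sub>v z j) $ i" using ij' A Z zc by auto
    also have "\<dots> = col X j $ i" using z[OF ij'(2)] by simp
    finally show "X $$ (i,j) = (A * Z) $$ (i,j)" using X ij' by auto
  qed (insert A X Z, auto)
  have ZK: "inK (kerS B) Z" using linclD(5)[OF lincl_kerS[OF B] Z] zc z by auto
  show "inK (imS A B) X" unfolding inK_def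
  proof
    fix c :: "'a vec" assume c: "c \<in> carrier_vec (dim_col X)"
    hence c': "c \<in> carrier_vec k" using X by auto
    have "X *\<^sub>v c = A *\<^sub>v (Z *\<^sub>v c)" using XAZ A Z c' by auto
    moreover have "Z *\<^sub>v c \<in> kerS B" using ZK c' Z unfolding inK_def by auto
    ultimately show "X *\<^sub>v c \<in> imS A B" unfolding imS_def by auto
  qed
qed

lemma lincl_preS:
  fixes B :: "'a::field mat"
  assumes B: "B \<in> carrier_mat m n" and W: "lincl m W"
  shows "lincl n (preS B W)"
  unfolding lincl_def
proof (intro conjI allI impI ballI)
  show "preS B W \<subseteq> carrier_vec n" using B unfolding preS_def by auto
  show "0\<^sub>v n \<in> preS B W" using linclD(2)[OF W] mat_mult_zero_vec[OF B] B unfolding preS_def by auto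
  fix x y assume x: "x \<in> preS B W" and y: "y \<in> preS B W"
  hence xc: "x \<in> carrier_vec n" "y \<in> carrier_vec n" "B *\<^sub>v x \<in> W" "B *\<^sub>v y \<in> W"
    using B unfolding preS_def by auto
  show "x + y \<in> preS B W" using xc linclD(3)[OF W] B unfolding preS_def by (auto simp: mult_add_distrib_mat_vec[OF B])
  show "x - y \<in> preS B W" using xc linclD(4)[OF W] B unfolding preS_def by (auto simp: mult_minus_distrib_mat_vec[OF B])
next
  fix X :: "'a mat" and k assume X: "X \<in> carrier_mat n k" and cols: "\<forall>j<k. col X j \<in> preS B W"
  have "\<forall>j<k. col (B * X) j \<in> W"
  proof (intro allI impI)
    fix j assume j: "j < k"
    have "col (B * X) j = B *\<^sub>v col X j" using B X j by (meson col_mult2)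
    moreover have "col X j \<in> preS B W" using cols j by auto
    ultimately show "col (B * X) j \<in> W" unfolding preS_def by auto
  qed
  hence BXW: "inK W (B * X)" using linclD(5)[OF W, of "B * X" k] B X by auto
  show "inK (preS B W) X" unfolding inK_def
  proof
    fix c :: "'a vec" assume c: "c \<in> carrier_vec (dim_col X)"
    hence c': "c \<in> carrier_vec k" using X by auto
    have "B *\<^sub>v (X *\<^sub>v c) = (B * X) *\<^sub>v c" using B X c' by auto
    also have "\<dots> \<in> W" using BXW c' X B unfolding inK_def by auto
    finally show "X *\<^sub>v c \<in> preS B W" using X c' B unfolding preS_def by auto
  qed
qed

lemma col_minus_mat: "(X::'a::field mat) \<in> carrier_mat a b \<Longrightarrow> Y \<in> carrier_mat a b \<Longrightarrow> j < b \<Longrightarrow> col (X - Y) j = col X j - col Y j"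
  by (rule eq_vecI, auto)

lemma qbasis_qb:
  fixes K :: "'a::field vec set"
  assumes "qbasis n K us"
  shows "qb K (mat_of_cols n us)"
proof -
  have us: "set us \<subseteq> carrier_vec n" using assms unfolding qbasis_def by auto
  let ?U = "mat_of_cols n us" and ?k = "length us"
  show ?thesis unfolding qb_def
  proof (intro conjI ballI impI)
    fix c :: "'a vec" assume c: "c \<in> carrier_vec (dim_col ?U)" and K: "?U *\<^sub>v c \<in> K"
    have c': "c \<in> carrier_vec ?k" using c by auto
    have "vec ?k (\<lambda>i. c $ i) = c" using c' by (auto intro!: eq_vecI)
    hence "lc n (\<lambda>i. c $ i) us = ?U *\<^sub>v c" using lc_mat[OF us] by metis
    hence "\<forall>i<?k. c $ i = 0" using assms K unfolding qbasis_def by metis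
    thus "c = 0\<^sub>v (dim_col ?U)" using c' by (auto intro!: eq_vecI)
  next
    fix u :: "'a vec" assume u: "u \<in> carrier_vec (dim_row ?U)"
    then obtain c where "u - lc n c us \<in> K" using assms unfolding qbasis_def by auto
    thus "\<exists>c\<in>carrier_vec (dim_col ?U). u - ?U *\<^sub>v c \<in> K" using lc_mat[OF us]
      by (intro bexI[of _ "vec ?k c"], auto)
  qed
qed

definition eqv :: "'a::field vec set \<Rightarrow> 'a mat \<Rightarrow> 'a mat \<Rightarrow> bool" where
  "eqv K X Y \<longleftrightarrow> dim_row X = dim_row Y \<and> dim_col X = dim_col Y \<and>
     (\<forall>c\<in>carrier_vec (dim_col X). X *\<^sub>v c - Y *\<^sub>v c \<in> K)"

lemma eqv_of_inK:
  fixes X Y :: "'a::field mat"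
  assumes "X \<in> carrier_mat a b" "Y \<in> carrier_mat a b" "inK K (X - Y)"
  shows "eqv K X Y"
  using assms unfolding eqv_def inK_def by (auto simp: minus_mult_distrib_mat_vec)

lemma induced_eqv:
  fixes M :: "'a::field mat"
  assumes W: "lincl m W" and M: "M \<in> carrier_mat m n"
    and us: "set us \<subseteq> carrier_vec n" and vs: "set vs \<subseteq> carrier_vec m"
    and ind: "induced_mat m M W us vs M2"
  shows "eqv W (M * mat_of_cols n us) (mat_of_cols m vs * M2)"
proof -
  let ?U = "mat_of_cols n us" and ?V = "mat_of_cols m vs" and ?k = "length us" and ?l = "length vs"
  have M2: "M2 \<in> carrier_mat ?l ?k" using ind unfolding induced_mat_def by auto
  have "inK W (M * ?U - ?V * M2)"
  proof (rule linclD(5)[OF W, of _ ?k])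
    show "M * ?U - ?V * M2 \<in> carrier_mat m ?k" using M M2 by auto
    fix j assume j: "j < ?k"
    have uj: "us ! j \<in> carrier_vec n" using us j nth_mem[OF j] by blast
    have "col (M * ?U - ?V * M2) j = col (M * ?U) j - col (?V * M2) j"
      by (rule col_minus_mat[of _ m ?k], insert M M2 j, auto)
    also have "col (M * ?U) j = M *\<^sub>v (us ! j)" using col_mult2[OF M mat_of_cols_carrier(1) j] col_mat_of_cols[OF j uj] by simp
    also have "col (?V * M2) j = ?V *\<^sub>v col M2 j" using M2 j by auto
    also have "col M2 j = vec ?l (\<lambda>i. M2 $$ (i,j))" using M2 j by (auto intro!: eq_vecI)
    also have "?V *\<^sub>v vec ?l (\<lambda>i. M2 $$ (i,j)) = lc m (\<lambda>i. M2 $$ (i,j)) vs" using lc_mat[OF vs] by simp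
    finally show "col (M * ?U - ?V * M2) j \<in> W" using ind j unfolding induced_mat_def by auto
  qed
  moreover have "M * ?U \<in> carrier_mat m ?k" "?V * M2 \<in> carrier_mat m ?k" using M M2 by auto
  ultimately show ?thesis using eqv_of_inK by blast
qed

lemma vec_minus_swap: "(x::'a::field vec) \<in> carrier_vec a \<Longrightarrow> y \<in> carrier_vec a \<Longrightarrow> y - x = 0\<^sub>v a - (x - y)"
  by (rule eq_vecI, auto)

lemma vec_minus_trans: "(x::'a::field vec) \<in> carrier_vec a \<Longrightarrow> y \<in> carrier_vec a \<Longrightarrow> z \<in> carrier_vec a \<Longrightarrow> x - z = (x - y) + (y - z)"
  by (rule eq_vecI, auto)

lemma vec_minus_zero: "(x::'a::field vec) \<in> carrier_vec a \<Longrightarrow> y \<in> carrier_vec a \<Longrightarrow> x - y = 0\<^sub>v a \<Longrightarrow> x = y"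
proof (rule eq_vecI)
  fix i assume "x \<in> carrier_vec a" "y \<in> carrier_vec a" "x - y = 0\<^sub>v a" "i < dim_vec y"
  hence "(x - y) $ i = 0" by auto
  thus "x $ i = y $ i" using \<open>i < dim_vec y\<close> \<open>x \<in> carrier_vec a\<close> \<open>y \<in> carrier_vec a\<close> by auto
qed auto

lemma eqv_refl: "lincl a K \<Longrightarrow> (X::'a::field mat) \<in> carrier_mat a b \<Longrightarrow> eqv K X X"
proof -
  assume K: "lincl a K" and X: "X \<in> carrier_mat a b"
  have "\<And>c. c \<in> carrier_vec b \<Longrightarrow> X *\<^sub>v c - X *\<^sub>v c \<in> K"
  proof -
    fix c :: "'a vec" assume c: "c \<in> carrier_vec b"
    have "X *\<^sub>v c - X *\<^sub>v c = 0\<^sub>v a" using X c by (intro eq_vecI, auto)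
    thus "X *\<^sub>v c - X *\<^sub>v c \<in> K" using linclD(2)[OF K] by simp
  qed
  thus ?thesis using X unfolding eqv_def by auto
qed

lemma eqv_sym:
  assumes K: "lincl a K" and X: "(X::'a::field mat) \<in> carrier_mat a b" and e: "eqv K X Y"
  shows "eqv K Y X"
proof -
  have Y: "Y \<in> carrier_mat a b" using X e unfolding eqv_def by auto
  have "\<And>c. c \<in> carrier_vec b \<Longrightarrow> Y *\<^sub>v c - X *\<^sub>v c \<in> K"
  proof -
    fix c :: "'a vec" assume c: "c \<in> carrier_vec b"
    have "Y *\<^sub>v c - X *\<^sub>v c = 0\<^sub>v a - (X *\<^sub>v c - Y *\<^sub>v c)" by (rule vec_minus_swap[of _ a], insert X Y c, auto)
    also have "\<dots> \<in> K" using linclD(2,4)[OF K] e c X unfolding eqv_def by auto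
    finally show "Y *\<^sub>v c - X *\<^sub>v c \<in> K" .
  qed
  thus ?thesis using X Y unfolding eqv_def by auto
qed

lemma eqv_trans:
  assumes K: "lincl a K" and X: "(X::'a::field mat) \<in> carrier_mat a b" and e1: "eqv K X Y" and e2: "eqv K Y Z"
  shows "eqv K X Z"
proof -
  have Y: "Y \<in> carrier_mat a b" using X e1 unfolding eqv_def by auto
  have Z: "Z \<in> carrier_mat a b" using Y e2 unfolding eqv_def by auto
  have "\<And>c. c \<in> carrier_vec b \<Longrightarrow> X *\<^sub>v c - Z *\<^sub>v c \<in> K"
  proof -
    fix c :: "'a vec" assume c: "c \<in> carrier_vec b"
    have "X *\<^sub>v c - Z *\<^sub>v c = (X *\<^sub>v c - Y *\<^sub>v c) + (Y *\<^sub>v c - Z *\<^sub>v c)" by (rule vec_minus_trans[of _ a], insert X Y Z c, auto)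
    also have "\<dots> \<in> K" using linclD(3)[OF K] e1 e2 c X Y unfolding eqv_def by auto
    finally show "X *\<^sub>v c - Z *\<^sub>v c \<in> K" .
  qed
  thus ?thesis using X Z unfolding eqv_def by auto
qed

lemma eqv_mult_right:
  assumes X: "(X::'a::field mat) \<in> carrier_mat a b" and C: "C \<in> carrier_mat b d" and e: "eqv K X Y"
  shows "eqv K (X * C) (Y * C)"
proof -
  have Y: "Y \<in> carrier_mat a b" using X e unfolding eqv_def by auto
  have "\<And>c. c \<in> carrier_vec d \<Longrightarrow> (X * C) *\<^sub>v c - (Y * C) *\<^sub>v c \<in> K"
  proof -
    fix c :: "'a vec" assume c: "c \<in> carrier_vec d"
    have "(X * C) *\<^sub>v c - (Y * C) *\<^sub>v c = X *\<^sub>v (C *\<^sub>v c) - Y *\<^sub>v (C *\<^sub>v c)" using X Y C c by auto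
    also have "\<dots> \<in> K" using e c C X unfolding eqv_def by auto
    finally show "(X * C) *\<^sub>v c - (Y * C) *\<^sub>v c \<in> K" .
  qed
  thus ?thesis using X Y C unfolding eqv_def by auto
qed

lemma eqv_mult_left:
  assumes M: "(M::'a::field mat) \<in> carrier_mat a' a" and X: "X \<in> carrier_mat a b" and e: "eqv K X Y"
    and KW: "\<And>x. x \<in> K \<Longrightarrow> M *\<^sub>v x \<in> W"
  shows "eqv W (M * X) (M * Y)"
proof -
  have Y: "Y \<in> carrier_mat a b" using X e unfolding eqv_def by auto
  have "\<And>c. c \<in> carrier_vec b \<Longrightarrow> (M * X) *\<^sub>v c - (M * Y) *\<^sub>v c \<in> W"
  proof -
    fix c :: "'a vec" assume c: "c \<in> carrier_vec b"
    have "(M * X) *\<^sub>v c - (M * Y) *\<^sub>v c = M *\<^sub>v (X *\<^sub>v c - Y *\<^sub>v c)" using M X Y c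
      by (auto simp: mult_minus_distrib_mat_vec[OF M])
    also have "\<dots> \<in> W" using e c X KW unfolding eqv_def by auto
    finally show "(M * X) *\<^sub>v c - (M * Y) *\<^sub>v c \<in> W" .
  qed
  thus ?thesis using X Y M unfolding eqv_def by auto
qed

lemma qb_indep_mat:
  assumes V: "(V::'a::field mat) \<in> carrier_mat a l" and q: "qb K V"
    and X: "X \<in> carrier_mat l d" and Y: "Y \<in> carrier_mat l d"
    and e: "eqv K (V * X) (V * Y)"
  shows "X = Y"
proof (rule mat_eq_by_vec[OF X Y])
  fix c :: "'a vec" assume c: "c \<in> carrier_vec d"
  have "V *\<^sub>v (X *\<^sub>v c - Y *\<^sub>v c) = (V * X) *\<^sub>v c - (V * Y) *\<^sub>v c" using V X Y c
      by (subst mult_minus_distrib_mat_vec[OF V], auto)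
  also have "\<dots> \<in> K" using e c X V unfolding eqv_def by auto
  finally have inK: "V *\<^sub>v (X *\<^sub>v c - Y *\<^sub>v c) \<in> K" .
  have cc: "X *\<^sub>v c - Y *\<^sub>v c \<in> carrier_vec (dim_col V)" using V X Y c by auto
  have q1: "\<forall>c\<in>carrier_vec (dim_col V). V *\<^sub>v c \<in> K \<longrightarrow> c = 0\<^sub>v (dim_col V)"
    using q unfolding qb_def by (rule conjunct1)
  have "X *\<^sub>v c - Y *\<^sub>v c = 0\<^sub>v (dim_col V)" using q1 cc inK by blast
  hence h: "X *\<^sub>v c - Y *\<^sub>v c = 0\<^sub>v l" using V by simp
  have cX: "X *\<^sub>v c \<in> carrier_vec l" "Y *\<^sub>v c \<in> carrier_vec l" using X Y c by auto
  from vec_minus_zero[OF cX h] show "X *\<^sub>v c = Y *\<^sub>v c" .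
qed



lemma G_coord:
  fixes U U0 :: "'a::field mat"
  assumes K: "lincl n K" and q: "qb K U0" and U0: "U0 \<in> carrier_mat n k0" and U: "U \<in> carrier_mat n k"
  shows "\<exists>T \<in> carrier_mat k0 k. eqv K U (U0 * T)"
proof -
  have q2: "\<forall>u\<in>carrier_vec (dim_row U0). \<exists>c\<in>carrier_vec (dim_col U0). u - U0 *\<^sub>v c \<in> K"
    using q unfolding qb_def by (rule conjunct2)
  have "\<forall>j<k. \<exists>c. c \<in> carrier_vec k0 \<and> col U j - U0 *\<^sub>v c \<in> K"
  proof (intro allI impI)
    fix j assume j: "j < k"
    have "col U j \<in> carrier_vec (dim_row U0)" using U U0 j by auto
    then obtain c where "c \<in> carrier_vec (dim_col U0)" "col U j - U0 *\<^sub>v c \<in> K" using q2 by blast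
    thus "\<exists>c. c \<in> carrier_vec k0 \<and> col U j - U0 *\<^sub>v c \<in> K" using U0 by auto
  qed
  then obtain cf where cf: "\<And>j. j < k \<Longrightarrow> cf j \<in> carrier_vec k0 \<and> col U j - U0 *\<^sub>v cf j \<in> K" by metis
  define T where "T = mat_of_cols k0 (map cf [0..<k])"
  have T: "T \<in> carrier_mat k0 k" unfolding T_def by auto
  have colT: "\<And>j. j<k \<Longrightarrow> col T j = cf j" unfolding T_def using cf by auto
  have "inK K (U - U0 * T)"
  proof (rule linclD(5)[OF K, of _ k])
    show "U - U0 * T \<in> carrier_mat n k" using U U0 T by auto
    fix j assume j: "j < k"
    have "col (U - U0 * T) j = col U j - col (U0 * T) j" by (rule col_minus_mat[of _ n k], insert U U0 T j, auto)
    also have "col (U0 * T) j = U0 *\<^sub>v cf j" using col_mult2[OF U0 T j] colT[OF j] by simp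
    finally show "col (U - U0 * T) j \<in> K" using cf[OF j] by simp
  qed
  hence "eqv K U (U0 * T)" using eqv_of_inK[of U n k "U0 * T" K] U U0 T by auto
  thus ?thesis using T by auto
qed

lemma len_le:
  fixes A B :: "'a::field mat"
  assumes A: "A \<in> carrier_mat k k'" and B: "B \<in> carrier_mat k' k" and BA: "B * A = 1\<^sub>m k'"
  shows "k' \<le> k"
proof (rule ccontr)
  assume "\<not> k' \<le> k" hence kk: "k < k'" by simp
  define A' where "A' = mat k' k' (\<lambda>(i,j). if i < k then A $$ (i,j) else 0)"
  define B' where "B' = mat k' k' (\<lambda>(i,j). if j < k then B $$ (i,j) else 0)"
  have A': "A' \<in> carrier_mat k' k'" and B': "B' \<in> carrier_mat k' k'" unfolding A'_def B'_def by auto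
  have "B' * A' = B * A"
  proof (rule eq_matI)
    fix i j assume ij: "i < dim_row (B * A)" "j < dim_col (B * A)"
    hence ij': "i < k'" "j < k'" using A B by auto
    have "(B' * A') $$ (i,j) = (\<Sum>t\<in>{0..<k'}. B' $$ (i,t) * A' $$ (t,j))" using A' B' ij' by (auto simp: scalar_prod_def)
    also have "\<dots> = (\<Sum>t\<in>{0..<k}. B $$ (i,t) * A $$ (t,j))"
      by (rule sum.mono_neutral_cong_right, insert kk ij', auto simp: A'_def B'_def)
    also have "\<dots> = (B * A) $$ (i,j)" using A B ij' by (auto simp: scalar_prod_def)
    finally show "(B' * A') $$ (i,j) = (B * A) $$ (i,j)" .
  qed (insert A B A' B', auto)
  hence "B' * A' = 1\<^sub>m k'" using BA by simp
  hence AB': "A' * B' = 1\<^sub>m k'" using mat_mult_left_right_inverse[OF B' A'] by simp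
  have "(A' * B') $$ (k'-1, k'-1) = (\<Sum>t\<in>{0..<k'}. A' $$ (k'-1,t) * B' $$ (t,k'-1))" using A' B' kk by (auto simp: scalar_prod_def)
  also have "\<dots> = 0" using kk by (auto simp: A'_def intro!: sum.neutral)
  finally show False using AB' kk by simp
qed

lemma G_change:
  fixes U U0 :: "'a::field mat"
  assumes K: "lincl n K" and q: "qb K U" and q0: "qb K U0" and U: "U \<in> carrier_mat n k" and U0: "U0 \<in> carrier_mat n k0"
  shows "k = k0 \<and> (\<exists>T \<in> carrier_mat k0 k. invertible_mat T \<and> eqv K U (U0 * T))"
proof -
  obtain T where T: "T \<in> carrier_mat k0 k" and e1: "eqv K U (U0 * T)" using G_coord[OF K q0 U0 U] by blast
  obtain T' where T': "T' \<in> carrier_mat k k0" and e2: "eqv K U0 (U * T')" using G_coord[OF K q U U0] by blast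
  have a: "eqv K (U0 * T) ((U * T') * T)" by (rule eqv_mult_right[OF U0 T e2])
  have as: "(U * T') * T = U * (T' * T)" using U T T' by (simp add: assoc_mult_mat)
  have e3: "eqv K U (U * (T' * T))" using eqv_trans[OF K U e1 a] as by simp
  have "eqv K (U * (T' * T)) U" by (rule eqv_sym[OF K _ e3], insert U T T', auto)
  hence e4: "eqv K (U * (T' * T)) (U * 1\<^sub>m k)" using U by simp
  have TT: "T' * T = 1\<^sub>m k" by (rule qb_indep_mat[OF U q _ _ e4], insert T T', auto)
  have a': "eqv K (U * T') ((U0 * T) * T')" by (rule eqv_mult_right[OF U T' e1])
  have as': "(U0 * T) * T' = U0 * (T * T')" using U0 T T' by (simp add: assoc_mult_mat)
  have e3': "eqv K U0 (U0 * (T * T'))" using eqv_trans[OF K U0 e2 a'] as' by simp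
  have "eqv K (U0 * (T * T')) U0" by (rule eqv_sym[OF K _ e3'], insert U0 T T', auto)
  hence e4': "eqv K (U0 * (T * T')) (U0 * 1\<^sub>m k0)" using U0 by simp
  have TT': "T * T' = 1\<^sub>m k0" by (rule qb_indep_mat[OF U0 q0 _ _ e4'], insert T T', auto)
  have l1: "k \<le> k0" by (rule len_le[OF T T' TT])
  have l2: "k0 \<le> k" by (rule len_le[OF T' T TT'])
  have kk: "k = k0" using l1 l2 by simp
  have "invertible_mat T" unfolding invertible_mat_def inverts_mat_def square_mat.simps
    using T T' TT TT' kk by (intro conjI exI[of _ T'], auto)
  thus ?thesis using kk T e1 by auto
qed

definition qdata :: "nat \<Rightarrow> nat \<Rightarrow> 'a::field mat \<Rightarrow> 'a mat \<Rightarrow> 'a mat \<Rightarrow> 'a mat \<Rightarrow> 'a mat \<Rightarrow> 'a mat \<Rightarrow> bool" where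
  "qdata m n A B U V A2 B2 \<longleftrightarrow> A \<in> carrier_mat m n \<and> B \<in> carrier_mat m n \<and>
     U \<in> carrier_mat n (dim_col U) \<and> V \<in> carrier_mat m (dim_col V) \<and>
     A2 \<in> carrier_mat (dim_col V) (dim_col U) \<and> B2 \<in> carrier_mat (dim_col V) (dim_col U) \<and>
     qb (kerS B) U \<and> qb (imS A B) V \<and>
     eqv (imS A B) (A * U) (V * A2) \<and> eqv (imS A B) (B * U) (V * B2)"

lemma compare_one:
  fixes M :: "'a::field mat"
  assumes W: "lincl m W" and K: "lincl n K" and M: "M \<in> carrier_mat m n" and U: "U \<in> carrier_mat n k" and U0: "U0 \<in> carrier_mat n k"
    and V: "V \<in> carrier_mat m l" and V0: "V0 \<in> carrier_mat m l"
    and M2: "M2 \<in> carrier_mat l k" and M0: "M0 \<in> carrier_mat l k" and T: "T \<in> carrier_mat k k" and T': "T' \<in> carrier_mat l l"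
    and qV0: "qb W V0" and KW: "\<And>x. x \<in> K \<Longrightarrow> M *\<^sub>v x \<in> W"
    and eU: "eqv K U (U0 * T)" and eV: "eqv W V (V0 * T')"
    and e: "eqv W (M * U) (V * M2)" and e0: "eqv W (M * U0) (V0 * M0)"
  shows "M0 * T = T' * M2"
proof -
  have MU0: "M * U0 \<in> carrier_mat m k" using M U0 by auto
  have V0M0: "V0 * M0 \<in> carrier_mat m k" using V0 M0 by auto
  have s1: "eqv W ((V0 * M0) * T) ((M * U0) * T)" by (rule eqv_mult_right[OF V0M0 T eqv_sym[OF W MU0 e0]])
  have s2: "eqv W (M * (U0 * T)) (M * U)"
    by (rule eqv_mult_left[OF M _ eqv_sym[OF K U eU] KW], insert U0 T, auto)
  have s4: "eqv W (V * M2) ((V0 * T') * M2)" by (rule eqv_mult_right[OF V M2 eV])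
  have r1: "(M * U0) * T = M * (U0 * T)" using M U0 T by (simp add: assoc_mult_mat)
  have r2: "(V0 * T') * M2 = V0 * (T' * M2)" using V0 T' M2 by (simp add: assoc_mult_mat)
  have r3: "(V0 * M0) * T = V0 * (M0 * T)" using V0 M0 T by (simp add: assoc_mult_mat)
  have c1: "V0 * (M0 * T) \<in> carrier_mat m k" using V0 M0 T by auto
  have t1: "eqv W (V0 * (M0 * T)) (M * U)" using eqv_trans[OF W c1 s1[unfolded r1 r3] s2] .
  have t2: "eqv W (V0 * (M0 * T)) (V * M2)" using eqv_trans[OF W c1 t1 e] .
  have t3: "eqv W (V0 * (M0 * T)) (V0 * (T' * M2))" using eqv_trans[OF W c1 t2 s4[unfolded r2]] .
  show ?thesis by (rule qb_indep_mat[OF V0 qV0 _ _ t3], insert M0 T T' M2, auto)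
qed

lemma qdata_compare:
  fixes A :: "'a::field mat"
  assumes d: "qdata m n A B U V A2 B2" and d0: "qdata m n A B U0 V0 A0 B0"
  shows "pair_equiv A2 B2 A0 B0"
proof -
  define k l k0 l0 where "k = dim_col U" and "l = dim_col V" and "k0 = dim_col U0" and "l0 = dim_col V0"
  from d have A: "A \<in> carrier_mat m n" and B: "B \<in> carrier_mat m n" and U: "U \<in> carrier_mat n k"
    and V: "V \<in> carrier_mat m l" and A2: "A2 \<in> carrier_mat l k" and B2: "B2 \<in> carrier_mat l k"
    and qU: "qb (kerS B) U" and qV: "qb (imS A B) V" and eA: "eqv (imS A B) (A * U) (V * A2)"
    and eB: "eqv (imS A B) (B * U) (V * B2)"
    unfolding qdata_def k_def l_def by auto
  from d0 have U0: "U0 \<in> carrier_mat n k0"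
    and V0: "V0 \<in> carrier_mat m l0" and A0: "A0 \<in> carrier_mat l0 k0" and B0: "B0 \<in> carrier_mat l0 k0"
    and qU0: "qb (kerS B) U0" and qV0: "qb (imS A B) V0" and eA0: "eqv (imS A B) (A * U0) (V0 * A0)"
    and eB0: "eqv (imS A B) (B * U0) (V0 * B0)"
    unfolding qdata_def k0_def l0_def by auto
  have K: "lincl n (kerS B)" by (rule lincl_kerS[OF B])
  have W: "lincl m (imS A B)" by (rule lincl_imS[OF A B])
  obtain T where kk: "k = k0" and T: "T \<in> carrier_mat k0 k" "invertible_mat T" and eU: "eqv (kerS B) U (U0 * T)"
    using G_change[OF K qU qU0 U U0] by blast
  obtain T' where ll: "l = l0" and T': "T' \<in> carrier_mat l0 l" "invertible_mat T'" and eV: "eqv (imS A B) V (V0 * T')"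
    using G_change[OF W qV qV0 V V0] by blast
  have AKW: "\<And>x. x \<in> kerS B \<Longrightarrow> A *\<^sub>v x \<in> imS A B" unfolding imS_def by auto
  have BKW: "\<And>x. x \<in> kerS B \<Longrightarrow> B *\<^sub>v x \<in> imS A B" using linclD(2)[OF W] B unfolding kerS_def by auto
  have U0': "U0 \<in> carrier_mat n k" and V0': "V0 \<in> carrier_mat m l" and A0': "A0 \<in> carrier_mat l k" and B0': "B0 \<in> carrier_mat l k"
    and T1: "T \<in> carrier_mat k k" and T1': "T' \<in> carrier_mat l l"
    using U0 V0 A0 B0 T T' kk ll by auto
  have 1: "A0 * T = T' * A2" by (rule compare_one[OF W K A U U0' V V0' A2 A0' T1 T1' qV0 AKW eU eV eA eA0])
  have 2: "B0 * T = T' * B2" by (rule compare_one[OF W K B U U0' V V0' B2 B0' T1 T1' qV0 BKW eU eV eB eB0])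
  show ?thesis unfolding pair_equiv_def
    using A2 B2 A0' B0' T1 T1' T(2) T'(2) 1 2 by (intro conjI exI[of _ T'] exI[of _ T], auto)
qed

lemma inv_obtain:
  fixes S :: "'a::field mat"
  assumes "S \<in> carrier_mat m m" "invertible_mat S"
  obtains Si where "Si \<in> carrier_mat m m" "S * Si = 1\<^sub>m m" "Si * S = 1\<^sub>m m"
proof -
  obtain Si where i: "inverts_mat S Si" "inverts_mat Si S" using assms unfolding invertible_mat_def by auto
  have "dim_col (S * Si) = dim_col (1\<^sub>m (dim_row S) :: 'a mat)" using i unfolding inverts_mat_def by simp
  hence c: "dim_col Si = m" using assms by simp
  have "dim_col (Si * S) = dim_col (1\<^sub>m (dim_row Si) :: 'a mat)" using i unfolding inverts_mat_def by simp
  hence r: "dim_row Si = m" using assms by simp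
  show ?thesis using that[of Si] i c r assms unfolding inverts_mat_def by auto
qed

lemma inv_vec:
  fixes R :: "'a::field mat"
  assumes "R \<in> carrier_mat n n" "Ri \<in> carrier_mat n n" "R * Ri = 1\<^sub>m n" "y \<in> carrier_vec n"
  shows "R *\<^sub>v (Ri *\<^sub>v y) = y"
proof -
  have "R *\<^sub>v (Ri *\<^sub>v y) = (R * Ri) *\<^sub>v y" by (rule sym, rule assoc_mult_mat_vec[OF assms(1,2,4)])
  also have "\<dots> = 1\<^sub>m n *\<^sub>v y" by (simp only: assms(3))
  also have "\<dots> = y" using assms(4) by simp
  finally show ?thesis .
qed

lemma qdata_transfer:
  fixes A :: "'a::field mat"
  assumes d: "qdata m n A B U V A2 B2"
   and S: "S \<in> carrier_mat m m" "invertible_mat S" and R: "R \<in> carrier_mat n n" "invertible_mat R"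
   and A': "A' \<in> carrier_mat m n" and B': "B' \<in> carrier_mat m n"
   and SA: "S * A = A' * R" and SB: "S * B = B' * R"
  shows "qdata m n A' B' (R * U) (S * V) A2 B2"
proof -
  define k l where "k = dim_col U" and "l = dim_col V"
  from d have A: "A \<in> carrier_mat m n" and B: "B \<in> carrier_mat m n" and U: "U \<in> carrier_mat n k"
    and V: "V \<in> carrier_mat m l" and A2: "A2 \<in> carrier_mat l k" and B2: "B2 \<in> carrier_mat l k"
    and qU: "qb (kerS B) U" and qV: "qb (imS A B) V" and eA: "eqv (imS A B) (A * U) (V * A2)"
    and eB: "eqv (imS A B) (B * U) (V * B2)"
    unfolding qdata_def k_def l_def by auto
  obtain Si where Si: "Si \<in> carrier_mat m m" "S * Si = 1\<^sub>m m" "Si * S = 1\<^sub>m m" using inv_obtain[OF S] by blast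
  obtain Ri where Ri: "Ri \<in> carrier_mat n n" "R * Ri = 1\<^sub>m n" "Ri * R = 1\<^sub>m n" using inv_obtain[OF R] by blast
  have SAv: "\<And>x. x \<in> carrier_vec n \<Longrightarrow> S *\<^sub>v (A *\<^sub>v x) = A' *\<^sub>v (R *\<^sub>v x)"
  proof -
    fix x :: "'a vec" assume x: "x \<in> carrier_vec n"
    have "S *\<^sub>v (A *\<^sub>v x) = (S * A) *\<^sub>v x" using S A x by auto
    also have "\<dots> = (A' * R) *\<^sub>v x" using SA by simp
    also have "\<dots> = A' *\<^sub>v (R *\<^sub>v x)" using A' R x by auto
    finally show "S *\<^sub>v (A *\<^sub>v x) = A' *\<^sub>v (R *\<^sub>v x)" .
  qed
  have SBv: "\<And>x. x \<in> carrier_vec n \<Longrightarrow> S *\<^sub>v (B *\<^sub>v x) = B' *\<^sub>v (R *\<^sub>v x)"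
  proof -
    fix x :: "'a vec" assume x: "x \<in> carrier_vec n"
    have "S *\<^sub>v (B *\<^sub>v x) = (S * B) *\<^sub>v x" using S B x by auto
    also have "\<dots> = (B' * R) *\<^sub>v x" using SB by simp
    also have "\<dots> = B' *\<^sub>v (R *\<^sub>v x)" using B' R x by auto
    finally show "S *\<^sub>v (B *\<^sub>v x) = B' *\<^sub>v (R *\<^sub>v x)" .
  qed
  have kB1: "\<And>x. x \<in> kerS B \<Longrightarrow> R *\<^sub>v x \<in> kerS B'"
  proof -
    fix x assume x: "x \<in> kerS B"
    hence xc: "x \<in> carrier_vec n" and bx: "B *\<^sub>v x = 0\<^sub>v m" using B unfolding kerS_def by auto
    have "B' *\<^sub>v (R *\<^sub>v x) = S *\<^sub>v (B *\<^sub>v x)" using SBv[OF xc] by simp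
    also have "\<dots> = 0\<^sub>v m" using bx mat_mult_zero_vec[OF S(1)] by simp
    finally show "R *\<^sub>v x \<in> kerS B'" using B' R xc unfolding kerS_def by auto
  qed
  have kB2: "\<And>y. y \<in> kerS B' \<Longrightarrow> Ri *\<^sub>v y \<in> kerS B"
  proof -
    fix y assume y: "y \<in> kerS B'"
    hence yc: "y \<in> carrier_vec n" and by0: "B' *\<^sub>v y = 0\<^sub>v m" using B' unfolding kerS_def by auto
    have ry: "Ri *\<^sub>v y \<in> carrier_vec n" using Ri yc by auto
    have "B *\<^sub>v (Ri *\<^sub>v y) = Si *\<^sub>v (S *\<^sub>v (B *\<^sub>v (Ri *\<^sub>v y)))"
      using inv_vec[OF Si(1) S(1) Si(3)] B ry by auto
    also have "\<dots> = Si *\<^sub>v (B' *\<^sub>v (R *\<^sub>v (Ri *\<^sub>v y)))" using SBv[OF ry] by simp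
    also have "\<dots> = Si *\<^sub>v (B' *\<^sub>v y)" using inv_vec[OF R(1) Ri(1) Ri(2) yc] by simp
    also have "\<dots> = 0\<^sub>v m" using by0 mat_mult_zero_vec[OF Si(1)] by simp
    finally show "Ri *\<^sub>v y \<in> kerS B" using B ry unfolding kerS_def by auto
  qed
  have iW1: "\<And>w. w \<in> imS A B \<Longrightarrow> S *\<^sub>v w \<in> imS A' B'"
  proof -
    fix w assume "w \<in> imS A B"
    then obtain x where x: "x \<in> kerS B" "w = A *\<^sub>v x" unfolding imS_def by auto
    have xc: "x \<in> carrier_vec n" using x B unfolding kerS_def by auto
    have "S *\<^sub>v w = A' *\<^sub>v (R *\<^sub>v x)" using SAv[OF xc] x by simp
    thus "S *\<^sub>v w \<in> imS A' B'" using kB1[OF x(1)] unfolding imS_def by auto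
  qed
  have iW2: "\<And>w. w \<in> imS A' B' \<Longrightarrow> Si *\<^sub>v w \<in> imS A B"
  proof -
    fix w assume "w \<in> imS A' B'"
    then obtain z where z: "z \<in> kerS B'" "w = A' *\<^sub>v z" unfolding imS_def by auto
    have zc: "z \<in> carrier_vec n" using z B' unfolding kerS_def by auto
    have rz: "Ri *\<^sub>v z \<in> carrier_vec n" using Ri zc by auto
    have "Si *\<^sub>v w = Si *\<^sub>v (A' *\<^sub>v (R *\<^sub>v (Ri *\<^sub>v z)))" using inv_vec[OF R(1) Ri(1) Ri(2) zc] z by simp
    also have "\<dots> = Si *\<^sub>v (S *\<^sub>v (A *\<^sub>v (Ri *\<^sub>v z)))" using SAv[OF rz] by simp
    also have "\<dots> = A *\<^sub>v (Ri *\<^sub>v z)" using inv_vec[OF Si(1) S(1) Si(3)] A rz by auto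
    finally show "Si *\<^sub>v w \<in> imS A B" using kB2[OF z(1)] unfolding imS_def by auto
  qed
  have RU: "R * U \<in> carrier_mat n k" and SV: "S * V \<in> carrier_mat m l" using R U S V by auto
  have qU': "qb (kerS B') (R * U)" unfolding qb_def
  proof (intro conjI ballI impI)
    fix c :: "'a vec" assume c: "c \<in> carrier_vec (dim_col (R * U))" and inK: "(R * U) *\<^sub>v c \<in> kerS B'"
    have c': "c \<in> carrier_vec k" using c U by auto
    have "Ri *\<^sub>v ((R * U) *\<^sub>v c) = U *\<^sub>v c" using inv_vec[OF Ri(1) R(1) Ri(3), of "U *\<^sub>v c"] R U c' by auto
    hence "U *\<^sub>v c \<in> kerS B" using kB2[OF inK] by simp
    hence "c = 0\<^sub>v (dim_col U)" using qU c' U unfolding qb_def by auto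
    thus "c = 0\<^sub>v (dim_col (R * U))" by simp
  next
    fix u :: "'a vec" assume u: "u \<in> carrier_vec (dim_row (R * U))"
    hence u': "u \<in> carrier_vec n" using R by auto
    have riu: "Ri *\<^sub>v u \<in> carrier_vec (dim_row U)" using Ri u' U by auto
    have q2: "\<forall>u\<in>carrier_vec (dim_row U). \<exists>c\<in>carrier_vec (dim_col U). u - U *\<^sub>v c \<in> kerS B"
      using qU unfolding qb_def by (rule conjunct2)
    obtain c where c: "c \<in> carrier_vec (dim_col U)" "Ri *\<^sub>v u - U *\<^sub>v c \<in> kerS B" using q2 riu by blast
    have c': "c \<in> carrier_vec k" using c U by auto
    have "R *\<^sub>v (Ri *\<^sub>v u - U *\<^sub>v c) = R *\<^sub>v (Ri *\<^sub>v u) - R *\<^sub>v (U *\<^sub>v c)"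
      by (rule mult_minus_distrib_mat_vec[OF R(1)], insert Ri u' U c', auto)
    also have "\<dots> = u - (R * U) *\<^sub>v c" using inv_vec[OF R(1) Ri(1) Ri(2) u'] R U c' by auto
    finally have "u - (R * U) *\<^sub>v c \<in> kerS B'" using kB1[OF c(2)] by simp
    thus "\<exists>c\<in>carrier_vec (dim_col (R * U)). u - (R * U) *\<^sub>v c \<in> kerS B'" using c' U by auto
  qed
  have qV': "qb (imS A' B') (S * V)" unfolding qb_def
  proof (intro conjI ballI impI)
    fix c :: "'a vec" assume c: "c \<in> carrier_vec (dim_col (S * V))" and inK: "(S * V) *\<^sub>v c \<in> imS A' B'"
    have c': "c \<in> carrier_vec l" using c V by auto
    have "Si *\<^sub>v ((S * V) *\<^sub>v c) = V *\<^sub>v c" using inv_vec[OF Si(1) S(1) Si(3), of "V *\<^sub>v c"] S V c' by auto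
    hence "V *\<^sub>v c \<in> imS A B" using iW2[OF inK] by simp
    hence "c = 0\<^sub>v (dim_col V)" using qV c' V unfolding qb_def by auto
    thus "c = 0\<^sub>v (dim_col (S * V))" by simp
  next
    fix u :: "'a vec" assume u: "u \<in> carrier_vec (dim_row (S * V))"
    hence u': "u \<in> carrier_vec m" using S by auto
    have siu: "Si *\<^sub>v u \<in> carrier_vec (dim_row V)" using Si u' V by auto
    have q2: "\<forall>u\<in>carrier_vec (dim_row V). \<exists>c\<in>carrier_vec (dim_col V). u - V *\<^sub>v c \<in> imS A B"
      using qV unfolding qb_def by (rule conjunct2)
    obtain c where c: "c \<in> carrier_vec (dim_col V)" "Si *\<^sub>v u - V *\<^sub>v c \<in> imS A B" using q2 siu by blast
    have c': "c \<in> carrier_vec l" using c V by auto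
    have "S *\<^sub>v (Si *\<^sub>v u - V *\<^sub>v c) = S *\<^sub>v (Si *\<^sub>v u) - S *\<^sub>v (V *\<^sub>v c)"
      by (rule mult_minus_distrib_mat_vec[OF S(1)], insert Si u' V c', auto)
    also have "\<dots> = u - (S * V) *\<^sub>v c" using inv_vec[OF S(1) Si(1) Si(2) u'] S V c' by auto
    finally have "u - (S * V) *\<^sub>v c \<in> imS A' B'" using iW1[OF c(2)] by simp
    thus "\<exists>c\<in>carrier_vec (dim_col (S * V)). u - (S * V) *\<^sub>v c \<in> imS A' B'" using c' V by auto
  qed
  have r1: "A' * (R * U) = S * (A * U)"
  proof -
    have "A' * (R * U) = (A' * R) * U" using A' R U by (simp add: assoc_mult_mat)
    also have "\<dots> = (S * A) * U" using SA by simp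
    also have "\<dots> = S * (A * U)" using S A U by (simp add: assoc_mult_mat)
    finally show ?thesis .
  qed
  have r2: "B' * (R * U) = S * (B * U)"
  proof -
    have "B' * (R * U) = (B' * R) * U" using B' R U by (simp add: assoc_mult_mat)
    also have "\<dots> = (S * B) * U" using SB by simp
    also have "\<dots> = S * (B * U)" using S B U by (simp add: assoc_mult_mat)
    finally show ?thesis .
  qed
  have r3: "(S * V) * A2 = S * (V * A2)" "(S * V) * B2 = S * (V * B2)" using S V A2 B2 by (simp_all add: assoc_mult_mat)
  have eA': "eqv (imS A' B') (A' * (R * U)) ((S * V) * A2)"
    unfolding r1 r3 by (rule eqv_mult_left[OF S(1) _ eA iW1], insert A U, auto)
  have eB': "eqv (imS A' B') (B' * (R * U)) ((S * V) * B2)"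
    unfolding r2 r3 by (rule eqv_mult_left[OF S(1) _ eB iW1], insert B U, auto)
  show ?thesis unfolding qdata_def using A' B' RU SV A2 B2 qU' qV' eA' eB' k_def l_def by auto
qed



lemma vec_first_app: "(u::'a::field vec) \<in> carrier_vec a \<Longrightarrow> vec_first (u @\<^sub>v v) a = u"
  by (rule eq_vecI, auto simp: vec_first_def)

lemma vec_last_app: "(u::'a::field vec) \<in> carrier_vec a \<Longrightarrow> v \<in> carrier_vec b \<Longrightarrow> vec_last (u @\<^sub>v v) b = v"
  by (rule eq_vecI, auto simp: vec_last_def)

lemma zero_vec_app: "(0\<^sub>v (a + b) :: 'a::field vec) = 0\<^sub>v a @\<^sub>v 0\<^sub>v b"
  by (rule eq_vecI, auto)

lemma app_minus: "(u::'a::field vec) \<in> carrier_vec a \<Longrightarrow> u' \<in> carrier_vec a \<Longrightarrow> v \<in> carrier_vec b \<Longrightarrow> v' \<in> carrier_vec b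
  \<Longrightarrow> (u @\<^sub>v v) - (u' @\<^sub>v v') = (u - u') @\<^sub>v (v - v')"
  by (rule eq_vecI, auto)

lemma dsum_carrier: "(A::'a::field mat) \<in> carrier_mat a b \<Longrightarrow> X \<in> carrier_mat c d \<Longrightarrow> dsum A X \<in> carrier_mat (a+c) (b+d)"
  unfolding dsum_def by (rule four_block_carrier_mat)

lemma dsum_mult_vec:
  fixes A X :: "'a::field mat"
  assumes A: "A \<in> carrier_mat m n" and X: "X \<in> carrier_mat m' n'" and x1: "x1 \<in> carrier_vec n" and x2: "x2 \<in> carrier_vec n'"
  shows "dsum A X *\<^sub>v (x1 @\<^sub>v x2) = (A *\<^sub>v x1) @\<^sub>v (X *\<^sub>v x2)"
proof -
  have "dsum A X *\<^sub>v (x1 @\<^sub>v x2) = (A *\<^sub>v x1 + 0\<^sub>m m n' *\<^sub>v x2) @\<^sub>v (0\<^sub>m m' n *\<^sub>v x1 + X *\<^sub>v x2)"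
    unfolding dsum_def using A X by (subst four_block_mat_mult_vec[OF A _ _ X x1 x2], auto)
  also have "\<dots> = (A *\<^sub>v x1) @\<^sub>v (X *\<^sub>v x2)" using A X x1 x2 zero_mat_mult_vec[OF x1] zero_mat_mult_vec[OF x2] by simp
  finally show ?thesis .
qed

lemma split_vec: "(x::'a::field vec) \<in> carrier_vec (n + n') \<Longrightarrow> x = vec_first x n @\<^sub>v vec_last x n'"
  by simp

definition dset :: "nat \<Rightarrow> nat \<Rightarrow> 'a::field vec set \<Rightarrow> 'a vec set \<Rightarrow> 'a vec set" where
  "dset n n' K K' = {x \<in> carrier_vec (n + n'). vec_first x n \<in> K \<and> vec_last x n' \<in> K'}"

lemma dset_app: "(x1::'a::field vec) \<in> carrier_vec n \<Longrightarrow> x2 \<in> carrier_vec n' \<Longrightarrow> x1 @\<^sub>v x2 \<in> dset n n' K K' \<longleftrightarrow> x1 \<in> K \<and> x2 \<in> K'"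
  unfolding dset_def using vec_first_app[of x1 n x2] vec_last_app[of x1 n x2 n'] by auto

lemma dsum_mult_vec':
  fixes A X :: "'a::field mat"
  assumes A: "A \<in> carrier_mat m n" and X: "X \<in> carrier_mat m' n'" and x: "x \<in> carrier_vec (n + n')"
  shows "dsum A X *\<^sub>v x = (A *\<^sub>v vec_first x n) @\<^sub>v (X *\<^sub>v vec_last x n')"
  using dsum_mult_vec[OF A X vec_first_carrier vec_last_carrier, of x x] split_vec[OF x] by metis

lemma kerS_dsum:
  fixes B Y :: "'a::field mat"
  assumes B: "B \<in> carrier_mat m n" and Y: "Y \<in> carrier_mat m' n'"
  shows "kerS (dsum B Y) = dset n n' (kerS B) (kerS Y)"
proof -
  have BY: "dsum B Y \<in> carrier_mat (m+m') (n+n')" by (rule dsum_carrier[OF B Y])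
  show ?thesis
  proof (rule Set.set_eqI)
    fix x :: "'a vec"
    show "x \<in> kerS (dsum B Y) \<longleftrightarrow> x \<in> dset n n' (kerS B) (kerS Y)"
    proof (cases "x \<in> carrier_vec (n+n')")
      case True
      have "dsum B Y *\<^sub>v x = (B *\<^sub>v vec_first x n) @\<^sub>v (Y *\<^sub>v vec_last x n')" by (rule dsum_mult_vec'[OF B Y True])
      moreover have "(B *\<^sub>v vec_first x n) @\<^sub>v (Y *\<^sub>v vec_last x n') = 0\<^sub>v m @\<^sub>v 0\<^sub>v m' \<longleftrightarrow>
         B *\<^sub>v vec_first x n = 0\<^sub>v m \<and> Y *\<^sub>v vec_last x n' = 0\<^sub>v m'"
        using append_vec_eq[of "B *\<^sub>v vec_first x n" m "0\<^sub>v m"] B by auto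
      ultimately show ?thesis using True B Y BY unfolding kerS_def dset_def by (auto simp: zero_vec_app)
    next
      case False
      thus ?thesis using BY unfolding kerS_def dset_def by auto
    qed
  qed
qed

lemma imS_dsum:
  fixes A B X Y :: "'a::field mat"
  assumes A: "A \<in> carrier_mat m n" and B: "B \<in> carrier_mat m0 n" and X: "X \<in> carrier_mat m' n'" and Y: "Y \<in> carrier_mat m0' n'"
  shows "imS (dsum A X) (dsum B Y) = dset m m' (imS A B) (imS X Y)"
proof (rule Set.set_eqI)
  fix w :: "'a vec"
  have K: "kerS (dsum B Y) = dset n n' (kerS B) (kerS Y)" by (rule kerS_dsum[OF B Y])
  show "w \<in> imS (dsum A X) (dsum B Y) \<longleftrightarrow> w \<in> dset m m' (imS A B) (imS X Y)"
  proof
    assume "w \<in> imS (dsum A X) (dsum B Y)"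
    then obtain x where x: "x \<in> kerS (dsum B Y)" "w = dsum A X *\<^sub>v x" unfolding imS_def by auto
    have xc: "x \<in> carrier_vec (n + n')" "vec_first x n \<in> kerS B" "vec_last x n' \<in> kerS Y" using x(1) K unfolding dset_def by auto
    have "w = (A *\<^sub>v vec_first x n) @\<^sub>v (X *\<^sub>v vec_last x n')" using x(2) dsum_mult_vec'[OF A X xc(1)] by simp
    moreover have "A *\<^sub>v vec_first x n \<in> imS A B" "X *\<^sub>v vec_last x n' \<in> imS X Y" using xc unfolding imS_def by auto
    ultimately show "w \<in> dset m m' (imS A B) (imS X Y)" using dset_app[of "A *\<^sub>v vec_first x n" m "X *\<^sub>v vec_last x n'" m'] A X by auto
  next
    assume w: "w \<in> dset m m' (imS A B) (imS X Y)"
    hence wc: "w \<in> carrier_vec (m + m')" and w1: "vec_first w m \<in> imS A B" and w2: "vec_last w m' \<in> imS X Y"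
      unfolding dset_def by auto
    obtain a where a: "a \<in> kerS B" "vec_first w m = A *\<^sub>v a" using w1 unfolding imS_def by auto
    obtain b where b: "b \<in> kerS Y" "vec_last w m' = X *\<^sub>v b" using w2 unfolding imS_def by auto
    have ac: "a \<in> carrier_vec n" "b \<in> carrier_vec n'" using a b B Y unfolding kerS_def by auto
    have "a @\<^sub>v b \<in> kerS (dsum B Y)" using K dset_app[OF ac] a b by auto
    moreover have "dsum A X *\<^sub>v (a @\<^sub>v b) = w" using dsum_mult_vec[OF A X ac] a b split_vec[OF wc] by simp
    ultimately show "w \<in> imS (dsum A X) (dsum B Y)" unfolding imS_def by force
  qed
qed

lemma qb_dsum:
  fixes U U' :: "'a::field mat"
  assumes U: "U \<in> carrier_mat n k" and U': "U' \<in> carrier_mat n' k'" and q: "qb K U" and q': "qb K' U'"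
  shows "qb (dset n n' K K') (dsum U U')"
proof -
  have UU: "dsum U U' \<in> carrier_mat (n+n') (k+k')" by (rule dsum_carrier[OF U U'])
  have q1: "\<forall>c\<in>carrier_vec (dim_col U). U *\<^sub>v c \<in> K \<longrightarrow> c = 0\<^sub>v (dim_col U)" using q unfolding qb_def by (rule conjunct1)
  have q2: "\<forall>u\<in>carrier_vec (dim_row U). \<exists>c\<in>carrier_vec (dim_col U). u - U *\<^sub>v c \<in> K" using q unfolding qb_def by (rule conjunct2)
  have q1': "\<forall>c\<in>carrier_vec (dim_col U'). U' *\<^sub>v c \<in> K' \<longrightarrow> c = 0\<^sub>v (dim_col U')" using q' unfolding qb_def by (rule conjunct1)
  have q2': "\<forall>u\<in>carrier_vec (dim_row U'). \<exists>c\<in>carrier_vec (dim_col U'). u - U' *\<^sub>v c \<in> K'" using q' unfolding qb_def by (rule conjunct2)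
  show ?thesis unfolding qb_def
  proof (intro conjI ballI impI)
    fix c :: "'a vec" assume c: "c \<in> carrier_vec (dim_col (dsum U U'))" and inK: "dsum U U' *\<^sub>v c \<in> dset n n' K K'"
    have cc: "c \<in> carrier_vec (k + k')" using c UU by auto
    have "dsum U U' *\<^sub>v c = (U *\<^sub>v vec_first c k) @\<^sub>v (U' *\<^sub>v vec_last c k')" by (rule dsum_mult_vec'[OF U U' cc])
    hence "U *\<^sub>v vec_first c k \<in> K" "U' *\<^sub>v vec_last c k' \<in> K'"
      using inK dset_app[of "U *\<^sub>v vec_first c k" n "U' *\<^sub>v vec_last c k'" n' K K'] U U' by auto
    hence "vec_first c k = 0\<^sub>v k" "vec_last c k' = 0\<^sub>v k'" using q1 q1' U U' by auto
    hence "c = 0\<^sub>v k @\<^sub>v 0\<^sub>v k'" using split_vec[OF cc] by metis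
    thus "c = 0\<^sub>v (dim_col (dsum U U'))" using UU zero_vec_app by auto
  next
    fix u :: "'a vec" assume u: "u \<in> carrier_vec (dim_row (dsum U U'))"
    hence uc: "u \<in> carrier_vec (n + n')" using UU by auto
    obtain c1 where c1: "c1 \<in> carrier_vec k" "vec_first u n - U *\<^sub>v c1 \<in> K" using bspec[OF q2, of "vec_first u n"] U by auto
    obtain c2 where c2: "c2 \<in> carrier_vec k'" "vec_last u n' - U' *\<^sub>v c2 \<in> K'" using bspec[OF q2', of "vec_last u n'"] U' by auto
    have "u - dsum U U' *\<^sub>v (c1 @\<^sub>v c2) = (vec_first u n @\<^sub>v vec_last u n') - ((U *\<^sub>v c1) @\<^sub>v (U' *\<^sub>v c2))"
      using dsum_mult_vec[OF U U' c1(1) c2(1)] split_vec[OF uc] by simp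
    also have "\<dots> = (vec_first u n - U *\<^sub>v c1) @\<^sub>v (vec_last u n' - U' *\<^sub>v c2)"
      using app_minus[of "vec_first u n" n "U *\<^sub>v c1" "vec_last u n'" n' "U' *\<^sub>v c2"] U U' c1 c2 by auto
    also have "\<dots> \<in> dset n n' K K'" using dset_app[of "vec_first u n - U *\<^sub>v c1" n "vec_last u n' - U' *\<^sub>v c2" n' K K'] c1 c2 U U' by auto
    finally show "\<exists>c\<in>carrier_vec (dim_col (dsum U U')). u - dsum U U' *\<^sub>v c \<in> dset n n' K K'"
      using UU c1 c2 by (intro bexI[of _ "c1 @\<^sub>v c2"], auto)
  qed
qed

lemma dsum_mult:
  fixes A X U U' :: "'a::field mat"
  assumes A: "A \<in> carrier_mat m n" and X: "X \<in> carrier_mat m' n'" and U: "U \<in> carrier_mat n k" and U': "U' \<in> carrier_mat n' k'"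
  shows "dsum A X * dsum U U' = dsum (A * U) (X * U')"
proof (rule mat_eq_by_vec)
  show "dsum A X * dsum U U' \<in> carrier_mat (m+m') (k+k')" using dsum_carrier[OF A X] dsum_carrier[OF U U'] by auto
  show "dsum (A * U) (X * U') \<in> carrier_mat (m+m') (k+k')" using dsum_carrier[of "A*U" m k "X*U'" m' k'] A X U U' by auto
  fix c :: "'a vec" assume c: "c \<in> carrier_vec (k+k')"
  have "(dsum A X * dsum U U') *\<^sub>v c = dsum A X *\<^sub>v (dsum U U' *\<^sub>v c)" using dsum_carrier[OF A X] dsum_carrier[OF U U'] c by auto
  also have "dsum U U' *\<^sub>v c = (U *\<^sub>v vec_first c k) @\<^sub>v (U' *\<^sub>v vec_last c k')" by (rule dsum_mult_vec'[OF U U' c])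
  also have "dsum A X *\<^sub>v ((U *\<^sub>v vec_first c k) @\<^sub>v (U' *\<^sub>v vec_last c k')) = (A *\<^sub>v (U *\<^sub>v vec_first c k)) @\<^sub>v (X *\<^sub>v (U' *\<^sub>v vec_last c k'))"
    by (rule dsum_mult_vec[OF A X], insert U U', auto)
  also have "\<dots> = dsum (A * U) (X * U') *\<^sub>v c" using dsum_mult_vec'[of "A*U" m k "X*U'" m' k' c] A X U U' c by auto
  finally show "(dsum A X * dsum U U') *\<^sub>v c = dsum (A * U) (X * U') *\<^sub>v c" .
qed

lemma eqv_dsum:
  fixes P Q P' Q' :: "'a::field mat"
  assumes P: "P \<in> carrier_mat n k" and P': "P' \<in> carrier_mat n' k'" and e: "eqv K P Q" and e': "eqv K' P' Q'"
  shows "eqv (dset n n' K K') (dsum P P') (dsum Q Q')"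
proof -
  have Q: "Q \<in> carrier_mat n k" and Q': "Q' \<in> carrier_mat n' k'" using P P' e e' unfolding eqv_def by auto
  have PP: "dsum P P' \<in> carrier_mat (n+n') (k+k')" by (rule dsum_carrier[OF P P'])
  have QQ: "dsum Q Q' \<in> carrier_mat (n+n') (k+k')" by (rule dsum_carrier[OF Q Q'])
  have ee: "\<forall>c\<in>carrier_vec k. P *\<^sub>v c - Q *\<^sub>v c \<in> K" using e P unfolding eqv_def by auto
  have ee': "\<forall>c\<in>carrier_vec k'. P' *\<^sub>v c - Q' *\<^sub>v c \<in> K'" using e' P' unfolding eqv_def by auto
  have "\<forall>c\<in>carrier_vec (k+k'). dsum P P' *\<^sub>v c - dsum Q Q' *\<^sub>v c \<in> dset n n' K K'"
  proof
    fix c :: "'a vec" assume c: "c \<in> carrier_vec (k+k')"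
    have "dsum P P' *\<^sub>v c - dsum Q Q' *\<^sub>v c = ((P *\<^sub>v vec_first c k) @\<^sub>v (P' *\<^sub>v vec_last c k')) - ((Q *\<^sub>v vec_first c k) @\<^sub>v (Q' *\<^sub>v vec_last c k'))"
      using dsum_mult_vec'[OF P P' c] dsum_mult_vec'[OF Q Q' c] by simp
    also have "\<dots> = (P *\<^sub>v vec_first c k - Q *\<^sub>v vec_first c k) @\<^sub>v (P' *\<^sub>v vec_last c k' - Q' *\<^sub>v vec_last c k')"
      using app_minus[of "P *\<^sub>v vec_first c k" n "Q *\<^sub>v vec_first c k" "P' *\<^sub>v vec_last c k'" n' "Q' *\<^sub>v vec_last c k'"] P Q P' Q' by auto
    also have "\<dots> \<in> dset n n' K K'"
      using dset_app[of "P *\<^sub>v vec_first c k - Q *\<^sub>v vec_first c k" n "P' *\<^sub>v vec_last c k' - Q' *\<^sub>v vec_last c k'" n' K K'] P Q P' Q' ee ee' by auto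
    finally show "dsum P P' *\<^sub>v c - dsum Q Q' *\<^sub>v c \<in> dset n n' K K'" .
  qed
  thus ?thesis using PP QQ unfolding eqv_def by auto
qed

lemma qdata_dsum:
  fixes A :: "'a::field mat"
  assumes d: "qdata m n A B U V A2 B2" and d': "qdata m' n' X Y U' V' X2 Y2"
  shows "qdata (m+m') (n+n') (dsum A X) (dsum B Y) (dsum U U') (dsum V V') (dsum A2 X2) (dsum B2 Y2)"
proof -
  define k l k' l' where "k = dim_col U" and "l = dim_col V" and "k' = dim_col U'" and "l' = dim_col V'"
  from d have A: "A \<in> carrier_mat m n" and B: "B \<in> carrier_mat m n" and U: "U \<in> carrier_mat n k"
    and V: "V \<in> carrier_mat m l" and A2: "A2 \<in> carrier_mat l k" and B2: "B2 \<in> carrier_mat l k"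
    and qU: "qb (kerS B) U" and qV: "qb (imS A B) V" and eA: "eqv (imS A B) (A * U) (V * A2)"
    and eB: "eqv (imS A B) (B * U) (V * B2)"
    unfolding qdata_def k_def l_def by auto
  from d' have X: "X \<in> carrier_mat m' n'" and Y: "Y \<in> carrier_mat m' n'" and U': "U' \<in> carrier_mat n' k'"
    and V': "V' \<in> carrier_mat m' l'" and X2: "X2 \<in> carrier_mat l' k'" and Y2: "Y2 \<in> carrier_mat l' k'"
    and qU': "qb (kerS Y) U'" and qV': "qb (imS X Y) V'" and eX: "eqv (imS X Y) (X * U') (V' * X2)"
    and eY: "eqv (imS X Y) (Y * U') (V' * Y2)"
    unfolding qdata_def k'_def l'_def by auto
  have kS: "kerS (dsum B Y) = dset n n' (kerS B) (kerS Y)" by (rule kerS_dsum[OF B Y])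
  have iS: "imS (dsum A X) (dsum B Y) = dset m m' (imS A B) (imS X Y)" by (rule imS_dsum[OF A B X Y])
  have q1: "qb (kerS (dsum B Y)) (dsum U U')" unfolding kS by (rule qb_dsum[OF U U' qU qU'])
  have q2: "qb (imS (dsum A X) (dsum B Y)) (dsum V V')" unfolding iS by (rule qb_dsum[OF V V' qV qV'])
  have m1: "dsum A X * dsum U U' = dsum (A*U) (X*U')" by (rule dsum_mult[OF A X U U'])
  have m2: "dsum V V' * dsum A2 X2 = dsum (V*A2) (V'*X2)" by (rule dsum_mult[OF V V' A2 X2])
  have m3: "dsum B Y * dsum U U' = dsum (B*U) (Y*U')" by (rule dsum_mult[OF B Y U U'])
  have m4: "dsum V V' * dsum B2 Y2 = dsum (V*B2) (V'*Y2)" by (rule dsum_mult[OF V V' B2 Y2])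
  have AU: "A * U \<in> carrier_mat m k" "X * U' \<in> carrier_mat m' k'" "B * U \<in> carrier_mat m k" "Y * U' \<in> carrier_mat m' k'"
    using A X B Y U U' by auto
  have e1: "eqv (imS (dsum A X) (dsum B Y)) (dsum A X * dsum U U') (dsum V V' * dsum A2 X2)"
    unfolding iS m1 m2 by (rule eqv_dsum[OF AU(1) AU(2) eA eX])
  have e2: "eqv (imS (dsum A X) (dsum B Y)) (dsum B Y * dsum U U') (dsum V V' * dsum B2 Y2)"
    unfolding iS m3 m4 by (rule eqv_dsum[OF AU(3) AU(4) eB eY])
  have c: "dsum A X \<in> carrier_mat (m+m') (n+n')" "dsum B Y \<in> carrier_mat (m+m') (n+n')"
    "dsum U U' \<in> carrier_mat (n+n') (k+k')" "dsum V V' \<in> carrier_mat (m+m') (l+l')"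
    "dsum A2 X2 \<in> carrier_mat (l+l') (k+k')" "dsum B2 Y2 \<in> carrier_mat (l+l') (k+k')"
    using dsum_carrier A X B Y U U' V V' A2 X2 B2 Y2 by blast+
  show ?thesis unfolding qdata_def using c q1 q2 e1 e2 by auto
qed



fun brow :: "blk \<Rightarrow> nat" where
  "brow (IJ k) = k" | "brow (JI k) = k" | "brow (LR k) = k - 1" | "brow (LRT k) = k"
fun bcol :: "blk \<Rightarrow> nat" where
  "bcol (IJ k) = k" | "bcol (JI k) = k" | "bcol (LR k) = k" | "bcol (LRT k) = k - 1"

lemma blk_carrier:
  "fst (blk_pair b :: 'a::field mat \<times> 'a mat) \<in> carrier_mat (brow b) (bcol b)"
  "snd (blk_pair b :: 'a::field mat \<times> 'a mat) \<in> carrier_mat (brow b) (bcol b)"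
  by (cases b, auto simp: Jblk_def Lblk_def Rblk_def)+

lemma decomp_snoc: "decomp_pair r D (bs @ [b]) = dsum_pair (decomp_pair r D bs) (blk_pair b)"
  unfolding decomp_pair_def by simp

lemma decomp_nil: "decomp_pair r D [] = (1\<^sub>m r, D)"
  unfolding decomp_pair_def by simp

lemma decomp_carrier:
  fixes D :: "'a::field mat"
  assumes D: "D \<in> carrier_mat r r"
  shows "fst (decomp_pair r D bs) \<in> carrier_mat (r + sum_list (map brow bs)) (r + sum_list (map bcol bs)) \<and>
         snd (decomp_pair r D bs) \<in> carrier_mat (r + sum_list (map brow bs)) (r + sum_list (map bcol bs))"
proof (induction bs rule: rev_induct)
  case Nil thus ?case using D by (simp add: decomp_nil)
next
  case (snoc b bs)
  have 1: "fst (decomp_pair r D (bs @ [b])) = dsum (fst (decomp_pair r D bs)) (fst (blk_pair b))"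
    "snd (decomp_pair r D (bs @ [b])) = dsum (snd (decomp_pair r D bs)) (snd (blk_pair b))"
    by (simp_all add: decomp_snoc dsum_pair_def)
  show ?case unfolding 1 using dsum_carrier[OF conjunct1[OF snoc.IH] blk_carrier(1)[of b]]
      dsum_carrier[OF conjunct2[OF snoc.IH] blk_carrier(2)[of b]] by (simp add: add.assoc)
qed

lemma zero_row_not_surj:
  fixes M :: "'a::field mat"
  assumes M: "M \<in> carrier_mat a b" and i: "i < a" and z: "\<And>j. j < b \<Longrightarrow> M $$ (i,j) = 0"
  shows "\<not> surj_mat M"
proof
  assume "surj_mat M"
  hence S: "\<forall>y\<in>carrier_vec a. \<exists>x\<in>carrier_vec b. M *\<^sub>v x = y" using M unfolding surj_mat_def by auto
  have "unit_vec a i \<in> carrier_vec a" by simp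
  from bspec[OF S this] obtain x where x: "x \<in> carrier_vec b" "M *\<^sub>v x = unit_vec a i" by auto
  have "(M *\<^sub>v x) $ i = 0" using M x(1) i z by (auto simp: scalar_prod_def intro!: sum.neutral)
  moreover have "(unit_vec a i :: 'a vec) $ i = 1" using i by simp
  ultimately show False using x by simp
qed

lemma dsum_surj:
  fixes A X :: "'a::field mat"
  assumes A: "A \<in> carrier_mat a b" and X: "X \<in> carrier_mat c d" and s: "surj_mat (dsum A X)"
  shows "surj_mat A \<and> surj_mat X"
proof -
  have AX: "dsum A X \<in> carrier_mat (a+c) (b+d)" by (rule dsum_carrier[OF A X])
  have S: "\<forall>y\<in>carrier_vec (a+c). \<exists>x\<in>carrier_vec (b+d). dsum A X *\<^sub>v x = y" using s AX unfolding surj_mat_def by auto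
  show ?thesis unfolding surj_mat_def
  proof (intro conjI ballI)
    fix y :: "'a vec" assume y: "y \<in> carrier_vec (dim_row A)"
    hence y': "y \<in> carrier_vec a" using A by simp
    obtain x where x: "x \<in> carrier_vec (b+d)" "dsum A X *\<^sub>v x = y @\<^sub>v 0\<^sub>v c" using bspec[OF S, of "y @\<^sub>v 0\<^sub>v c"] y' by auto
    hence "(A *\<^sub>v vec_first x b) @\<^sub>v (X *\<^sub>v vec_last x d) = y @\<^sub>v 0\<^sub>v c" using dsum_mult_vec'[OF A X x(1)] by simp
    hence "A *\<^sub>v vec_first x b = y" using append_vec_eq[of "A *\<^sub>v vec_first x b" a y] A y' by auto
    thus "\<exists>x\<in>carrier_vec (dim_col A). A *\<^sub>v x = y" using A by (intro bexI[of _ "vec_first x b"], auto)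
  next
    fix y :: "'a vec" assume y: "y \<in> carrier_vec (dim_row X)"
    hence y': "y \<in> carrier_vec c" using X by simp
    obtain x where x: "x \<in> carrier_vec (b+d)" "dsum A X *\<^sub>v x = 0\<^sub>v a @\<^sub>v y" using bspec[OF S, of "0\<^sub>v a @\<^sub>v y"] y' by auto
    hence "(A *\<^sub>v vec_first x b) @\<^sub>v (X *\<^sub>v vec_last x d) = 0\<^sub>v a @\<^sub>v y" using dsum_mult_vec'[OF A X x(1)] by simp
    hence "X *\<^sub>v vec_last x d = y" using append_vec_eq[of "A *\<^sub>v vec_first x b" a "0\<^sub>v a"] A y' by auto
    thus "\<exists>x\<in>carrier_vec (dim_col X). X *\<^sub>v x = y" using X by (intro bexI[of _ "vec_last x d"], auto)
  qed
qed

lemma blk_surj_LR: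
  assumes sz: "1 \<le> blk_size b" and s1: "surj_mat (fst (blk_pair b :: 'a::field mat \<times> 'a mat))"
    and s2: "surj_mat (snd (blk_pair b :: 'a::field mat \<times> 'a mat))"
  shows "\<exists>k. b = LR k"
proof (cases b)
  case (IJ k)
  have "\<not> surj_mat (Jblk k :: 'a mat)"
    by (rule zero_row_not_surj[of _ k k 0], insert sz IJ, auto simp: Jblk_def)
  thus ?thesis using s2 IJ by simp
next
  case (JI k)
  have "\<not> surj_mat (Jblk k :: 'a mat)"
    by (rule zero_row_not_surj[of _ k k 0], insert sz JI, auto simp: Jblk_def)
  thus ?thesis using s1 JI by simp
next
  case (LRT k)
  have "\<not> surj_mat (transpose_mat (Lblk k) :: 'a mat)"
    by (rule zero_row_not_surj[of _ k "k - 1" "k - 1"], insert sz LRT, auto simp: Lblk_def)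
  thus ?thesis using s1 LRT by simp
qed auto

lemma surj_allLR:
  fixes D :: "'a::field mat"
  assumes D: "D \<in> carrier_mat r r"
  shows "\<forall>b\<in>set bs. 1 \<le> blk_size b \<Longrightarrow> surj_mat (fst (decomp_pair r D bs)) \<Longrightarrow> surj_mat (snd (decomp_pair r D bs))
     \<Longrightarrow> \<forall>b\<in>set bs. \<exists>k. b = LR k"
proof (induction bs rule: rev_induct)
  case Nil thus ?case by simp
next
  case (snoc b bs)
  have 1: "fst (decomp_pair r D (bs @ [b])) = dsum (fst (decomp_pair r D bs)) (fst (blk_pair b))"
    "snd (decomp_pair r D (bs @ [b])) = dsum (snd (decomp_pair r D bs)) (snd (blk_pair b))"
    by (simp_all add: decomp_snoc dsum_pair_def)
  have c: "fst (decomp_pair r D bs) \<in> carrier_mat (r + sum_list (map brow bs)) (r + sum_list (map bcol bs))"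
    "snd (decomp_pair r D bs) \<in> carrier_mat (r + sum_list (map brow bs)) (r + sum_list (map bcol bs))"
    using decomp_carrier[OF D, of bs] by auto
  have s1: "surj_mat (fst (decomp_pair r D bs)) \<and> surj_mat (fst (blk_pair b) :: 'a mat)"
    by (rule dsum_surj[OF c(1) blk_carrier(1)], insert snoc.prems(2) 1, simp)
  have s2: "surj_mat (snd (decomp_pair r D bs)) \<and> surj_mat (snd (blk_pair b) :: 'a mat)"
    by (rule dsum_surj[OF c(2) blk_carrier(2)], insert snoc.prems(3) 1, simp)
  have "\<forall>b\<in>set bs. \<exists>k. b = LR k" using snoc.IH snoc.prems(1) s1 s2 by auto
  moreover have "\<exists>k. b = LR k" using blk_surj_LR[of b] snoc.prems(1) s1 s2 by auto
  ultimately show ?case by auto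
qed

lemma sum_delta_mult: "t < (b::nat) \<Longrightarrow> (\<Sum>j\<in>{0..<b}. (if j = t then 1 else 0) * (g j :: 'a::field)) = g t"
proof -
  assume t: "t < b"
  have "(\<Sum>j\<in>{0..<b}. (if j = t then 1 else 0) * g j) = (\<Sum>j\<in>{0..<b}. if j = t then g j else 0)"
    by (rule sum.cong, auto)
  also have "\<dots> = g t" using t by simp
  finally show ?thesis .
qed

definition Sft :: "nat \<Rightarrow> 'a::field mat" where
  "Sft n = mat n (n - 1) (\<lambda>(i,j). if i = Suc j then 1 else 0)"

lemma Sft_carrier: "Sft n \<in> carrier_mat n (n - 1)" unfolding Sft_def by auto

lemma Sft_mv:
  assumes c: "(c::'a::field vec) \<in> carrier_vec (n - 1)" and i: "i < n"
  shows "(Sft n *\<^sub>v c) $ i = (if i = 0 then 0 else c $ (i - 1))"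
proof -
  have "(Sft n *\<^sub>v c) $ i = (\<Sum>j\<in>{0..<n-1}. (if i = Suc j then 1 else 0) * c $ j)"
    using c i unfolding Sft_def by (auto simp: scalar_prod_def)
  also have "\<dots> = (if i = 0 then 0 else c $ (i - 1))"
  proof (cases "i = 0")
    case True thus ?thesis by simp
  next
    case False
    have "(\<Sum>j\<in>{0..<n-1}. (if i = Suc j then 1 else 0) * c $ j) = (\<Sum>j\<in>{0..<n-1}. (if j = i - 1 then 1 else 0) * c $ j)"
      using False by (intro sum.cong, auto)
    also have "\<dots> = c $ (i - 1)" by (rule sum_delta_mult, insert False i, auto)
    finally show ?thesis using False by simp
  qed
  finally show ?thesis .
qed

lemma L_mv:
  assumes c: "(c::'a::field vec) \<in> carrier_vec k" and i: "i < k - 1"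
  shows "(Lblk k *\<^sub>v c) $ i = c $ i"
proof -
  have "(Lblk k *\<^sub>v c) $ i = (\<Sum>j\<in>{0..<k}. (if j = i then 1 else 0) * c $ j)"
    using c i unfolding Lblk_def by (auto simp: scalar_prod_def)
  also have "\<dots> = c $ i" by (rule sum_delta_mult, insert i, auto)
  finally show ?thesis .
qed

lemma R_mv:
  assumes c: "(c::'a::field vec) \<in> carrier_vec k" and i: "i < k - 1"
  shows "(Rblk k *\<^sub>v c) $ i = c $ Suc i"
proof -
  have "(Rblk k *\<^sub>v c) $ i = (\<Sum>j\<in>{0..<k}. (if j = Suc i then 1 else 0) * c $ j)"
    using c i unfolding Rblk_def by (auto simp: scalar_prod_def)
  also have "\<dots> = c $ Suc i" by (rule sum_delta_mult, insert i, auto)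
  finally show ?thesis .
qed

lemma LR_carrier: "Lblk k \<in> carrier_mat (k - 1) k" "Rblk k \<in> carrier_mat (k - 1) k"
  unfolding Lblk_def Rblk_def by auto

lemma LR_dims[simp]: "dim_row (Lblk k) = k - 1" "dim_col (Lblk k) = k" "dim_row (Rblk k) = k - 1" "dim_col (Rblk k) = k"
  unfolding Lblk_def Rblk_def by auto

lemma Sft_dims[simp]: "dim_row (Sft n) = n" "dim_col (Sft n) = n - 1"
  unfolding Sft_def by auto

definition Zs :: "nat \<Rightarrow> 'a::field vec set" where
  "Zs n = {x \<in> carrier_vec n. \<forall>i. 0 < i \<and> i < n \<longrightarrow> x $ i = 0}"

lemma kerS_R: "kerS (Rblk k :: 'a::field mat) = Zs k"
proof (rule Set.set_eqI)
  fix x :: "'a vec"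
  show "x \<in> kerS (Rblk k) \<longleftrightarrow> x \<in> Zs k"
  proof (cases "x \<in> carrier_vec k")
    case True
    have "Rblk k *\<^sub>v x = 0\<^sub>v (k - 1) \<longleftrightarrow> (\<forall>i<k-1. (Rblk k *\<^sub>v x) $ i = 0)"
    proof
      assume "Rblk k *\<^sub>v x = 0\<^sub>v (k - 1)" thus "\<forall>i<k-1. (Rblk k *\<^sub>v x) $ i = 0" by simp
    next
      assume "\<forall>i<k-1. (Rblk k *\<^sub>v x) $ i = 0" thus "Rblk k *\<^sub>v x = 0\<^sub>v (k - 1)" by (intro eq_vecI, auto)
    qed
    also have "\<dots> \<longleftrightarrow> (\<forall>i<k-1. x $ Suc i = 0)" using R_mv[OF True] by auto
    also have "\<dots> \<longleftrightarrow> (\<forall>i. 0 < i \<and> i < k \<longrightarrow> x $ i = 0)"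
      by (auto, metis Suc_pred less_diff_conv add_Suc_right add_0_right One_nat_def)
    finally show ?thesis using True LR_carrier(2)[of k] unfolding kerS_def Zs_def by auto
  next
    case False thus ?thesis using LR_carrier(2)[of k] unfolding kerS_def Zs_def by auto
  qed
qed

lemma imS_LR:
  assumes k: "2 \<le> k"
  shows "imS (Lblk k :: 'a::field mat) (Rblk k) = Zs (k - 1)"
proof (rule Set.set_eqI)
  fix y :: "'a vec"
  show "y \<in> imS (Lblk k) (Rblk k) \<longleftrightarrow> y \<in> Zs (k - 1)"
  proof
    assume "y \<in> imS (Lblk k) (Rblk k)"
    then obtain x where x: "x \<in> Zs k" "y = Lblk k *\<^sub>v x" unfolding imS_def kerS_R by auto
    have xc: "x \<in> carrier_vec k" using x unfolding Zs_def by auto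
    have "\<forall>i. 0 < i \<and> i < k - 1 \<longrightarrow> y $ i = 0" using x L_mv[OF xc] unfolding Zs_def by auto
    moreover have "Lblk k *\<^sub>v x \<in> carrier_vec (k - 1)" by (rule mult_mat_vec_carrier[OF LR_carrier(1) xc])
    ultimately show "y \<in> Zs (k - 1)" using x(2) unfolding Zs_def by auto
  next
    assume y: "y \<in> Zs (k - 1)"
    hence yc: "y \<in> carrier_vec (k - 1)" and y0: "\<And>i. 0 < i \<Longrightarrow> i < k - 1 \<Longrightarrow> y $ i = 0" unfolding Zs_def by auto
    define x where "x = vec k (\<lambda>i. if i = 0 then y $ 0 else 0)"
    have xc: "x \<in> carrier_vec k" unfolding x_def by auto
    have xZ: "x \<in> kerS (Rblk k)" unfolding kerS_R Zs_def x_def by auto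
    have "Lblk k *\<^sub>v x = y"
    proof (rule eq_vecI)
      fix i assume i: "i < dim_vec y"
      hence i': "i < k - 1" using yc by auto
      have "(Lblk k *\<^sub>v x) $ i = x $ i" by (rule L_mv[OF xc i'])
      also have "\<dots> = y $ i" using i' y0[of i] unfolding x_def by auto
      finally show "(Lblk k *\<^sub>v x) $ i = y $ i" .
    qed (insert yc, auto)
    thus "y \<in> imS (Lblk k) (Rblk k)" using xZ unfolding imS_def by force
  qed
qed

lemma qb_Sft:
  assumes n: "1 \<le> n"
  shows "qb (Zs n :: 'a::field vec set) (Sft n)"
  unfolding qb_def
proof (intro conjI ballI impI)
  fix c :: "'a vec" assume c: "c \<in> carrier_vec (dim_col (Sft n :: 'a mat))" and Z: "Sft n *\<^sub>v c \<in> Zs n"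
  have c': "c \<in> carrier_vec (n - 1)" using c by simp
  show "c = 0\<^sub>v (dim_col (Sft n :: 'a mat))"
  proof (rule eq_vecI)
    fix j assume j: "j < dim_vec (0\<^sub>v (dim_col (Sft n :: 'a mat)) :: 'a vec)"
    hence j': "j < n - 1" by simp
    have "(Sft n *\<^sub>v c) $ Suc j = 0" using Z j' unfolding Zs_def by auto
    thus "c $ j = 0\<^sub>v (dim_col (Sft n :: 'a mat)) $ j" using Sft_mv[OF c', of "Suc j"] j' by auto
  qed (insert c', auto)
next
  fix u :: "'a vec" assume u: "u \<in> carrier_vec (dim_row (Sft n :: 'a mat))"
  hence u': "u \<in> carrier_vec n" by simp
  define c where "c = vec (n - 1) (\<lambda>j. u $ Suc j)"
  have c: "c \<in> carrier_vec (n - 1)" unfolding c_def by auto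
  have "u - Sft n *\<^sub>v c \<in> Zs n" unfolding Zs_def
  proof (intro CollectI conjI allI impI)
    have "Sft n *\<^sub>v c \<in> carrier_vec n" by (rule mult_mat_vec_carrier[OF Sft_carrier c])
    thus "u - Sft n *\<^sub>v c \<in> carrier_vec n" using u' by auto
    fix i assume i: "0 < i \<and> i < n"
    have "(Sft n *\<^sub>v c) $ i = c $ (i - 1)" using Sft_mv[OF c, of i] i by auto
    also have "\<dots> = u $ i" using i unfolding c_def by auto
    moreover have "Sft n *\<^sub>v c \<in> carrier_vec n" by (rule mult_mat_vec_carrier[OF Sft_carrier c])
    ultimately show "(u - Sft n *\<^sub>v c) $ i = 0" using i u' by auto
  qed
  thus "\<exists>c\<in>carrier_vec (dim_col (Sft n :: 'a mat)). u - Sft n *\<^sub>v c \<in> Zs n" using c by auto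
qed

lemma mv_minus_carrier: "(M::'a::field mat) \<in> carrier_mat a b \<Longrightarrow> N \<in> carrier_mat a b \<Longrightarrow> c \<in> carrier_vec b \<Longrightarrow> M *\<^sub>v c - N *\<^sub>v c \<in> carrier_vec a"
  using mult_mat_vec_carrier[of M a b c] mult_mat_vec_carrier[of N a b c] by (metis minus_carrier_vec)

lemma eqv_LR:
  assumes k: "2 \<le> k"
  shows "eqv (Zs (k - 1)) (Lblk k * Sft k :: 'a::field mat) (Sft (k - 1) * Lblk (k - 1))"
    and "eqv (Zs (k - 1)) (Rblk k * Sft k :: 'a::field mat) (Sft (k - 1) * Rblk (k - 1))"
proof -
  have c1: "Lblk k * Sft k \<in> carrier_mat (k-1) (k-1)" "Rblk k * Sft k \<in> carrier_mat (k-1) (k-1)"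
    "Sft (k - 1) * Lblk (k - 1) \<in> carrier_mat (k-1) (k-1)" "Sft (k - 1) * Rblk (k - 1) \<in> carrier_mat (k-1) (k-1)"
    using LR_carrier[of k] LR_carrier[of "k-1"] Sft_carrier[of k] Sft_carrier[of "k-1"] by auto
  {
    fix c :: "'a vec" assume c: "c \<in> carrier_vec (k - 1)"
    have Sc: "Sft k *\<^sub>v c \<in> carrier_vec k" by (rule mult_mat_vec_carrier[OF Sft_carrier c])
    have Lc: "Lblk (k - 1) *\<^sub>v c \<in> carrier_vec (k - 1 - 1)" by (rule mult_mat_vec_carrier[OF LR_carrier(1) c])
    have Rc: "Rblk (k - 1) *\<^sub>v c \<in> carrier_vec (k - 1 - 1)" by (rule mult_mat_vec_carrier[OF LR_carrier(2) c])
    have "(Lblk k * Sft k) *\<^sub>v c - (Sft (k - 1) * Lblk (k - 1)) *\<^sub>v c \<in> Zs (k - 1)" unfolding Zs_def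
    proof (intro CollectI conjI allI impI)
      show "(Lblk k * Sft k) *\<^sub>v c - (Sft (k - 1) * Lblk (k - 1)) *\<^sub>v c \<in> carrier_vec (k - 1)" by (rule mv_minus_carrier[OF c1(1) c1(3) c])
      fix i assume i: "0 < i \<and> i < k - 1"
      have e1: "(Lblk k * Sft k) *\<^sub>v c = Lblk k *\<^sub>v (Sft k *\<^sub>v c)" by (rule assoc_mult_mat_vec[OF LR_carrier(1) Sft_carrier c])
      have "((Lblk k * Sft k) *\<^sub>v c) $ i = (Lblk k *\<^sub>v (Sft k *\<^sub>v c)) $ i" by (simp only: e1)
      also have "\<dots> = (Sft k *\<^sub>v c) $ i" by (rule L_mv[OF Sc], insert i, simp)
      also have "\<dots> = c $ (i - 1)" using Sft_mv[OF c, of i] i by auto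
      finally have 1: "((Lblk k * Sft k) *\<^sub>v c) $ i = c $ (i - 1)" .
      have e2: "(Sft (k - 1) * Lblk (k - 1)) *\<^sub>v c = Sft (k - 1) *\<^sub>v (Lblk (k - 1) *\<^sub>v c)" by (rule assoc_mult_mat_vec[OF Sft_carrier LR_carrier(1) c])
      have "((Sft (k - 1) * Lblk (k - 1)) *\<^sub>v c) $ i = (Sft (k - 1) *\<^sub>v (Lblk (k - 1) *\<^sub>v c)) $ i" by (simp only: e2)
      also have "\<dots> = (Lblk (k - 1) *\<^sub>v c) $ (i - 1)" using Sft_mv[OF Lc, of i] i by simp
      also have "\<dots> = c $ (i - 1)" using L_mv[OF c, of "i - 1"] i by auto
      finally have 2: "((Sft (k - 1) * Lblk (k - 1)) *\<^sub>v c) $ i = c $ (i - 1)" .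
      have v1: "(Lblk k * Sft k) *\<^sub>v c \<in> carrier_vec (k - 1)" by (rule mult_mat_vec_carrier[OF c1(1) c])
      have v2: "(Sft (k - 1) * Lblk (k - 1)) *\<^sub>v c \<in> carrier_vec (k - 1)" by (rule mult_mat_vec_carrier[OF c1(3) c])
      show "((Lblk k * Sft k) *\<^sub>v c - (Sft (k - 1) * Lblk (k - 1)) *\<^sub>v c) $ i = 0"
        using 1 2 i v1 v2 by simp
    qed
  } note A = this
  {
    fix c :: "'a vec" assume c: "c \<in> carrier_vec (k - 1)"
    have Sc: "Sft k *\<^sub>v c \<in> carrier_vec k" by (rule mult_mat_vec_carrier[OF Sft_carrier c])
    have Rc: "Rblk (k - 1) *\<^sub>v c \<in> carrier_vec (k - 1 - 1)" by (rule mult_mat_vec_carrier[OF LR_carrier(2) c])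
    have "(Rblk k * Sft k) *\<^sub>v c - (Sft (k - 1) * Rblk (k - 1)) *\<^sub>v c \<in> Zs (k - 1)" unfolding Zs_def
    proof (intro CollectI conjI allI impI)
      show "(Rblk k * Sft k) *\<^sub>v c - (Sft (k - 1) * Rblk (k - 1)) *\<^sub>v c \<in> carrier_vec (k - 1)" by (rule mv_minus_carrier[OF c1(2) c1(4) c])
      fix i assume i: "0 < i \<and> i < k - 1"
      have e1: "(Rblk k * Sft k) *\<^sub>v c = Rblk k *\<^sub>v (Sft k *\<^sub>v c)" by (rule assoc_mult_mat_vec[OF LR_carrier(2) Sft_carrier c])
      have "((Rblk k * Sft k) *\<^sub>v c) $ i = (Rblk k *\<^sub>v (Sft k *\<^sub>v c)) $ i" by (simp only: e1)
      also have "\<dots> = (Sft k *\<^sub>v c) $ Suc i" by (rule R_mv[OF Sc], insert i, simp)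
      also have "\<dots> = c $ i" using Sft_mv[OF c, of "Suc i"] i by auto
      finally have 1: "((Rblk k * Sft k) *\<^sub>v c) $ i = c $ i" .
      have e2: "(Sft (k - 1) * Rblk (k - 1)) *\<^sub>v c = Sft (k - 1) *\<^sub>v (Rblk (k - 1) *\<^sub>v c)" by (rule assoc_mult_mat_vec[OF Sft_carrier LR_carrier(2) c])
      have "((Sft (k - 1) * Rblk (k - 1)) *\<^sub>v c) $ i = (Sft (k - 1) *\<^sub>v (Rblk (k - 1) *\<^sub>v c)) $ i" by (simp only: e2)
      also have "\<dots> = (Rblk (k - 1) *\<^sub>v c) $ (i - 1)" using Sft_mv[OF Rc, of i] i by simp
      also have "\<dots> = c $ Suc (i - 1)" using R_mv[OF c, of "i - 1"] i by auto
      finally have 2: "((Sft (k - 1) * Rblk (k - 1)) *\<^sub>v c) $ i = c $ i" using i by simp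
      have v1: "(Rblk k * Sft k) *\<^sub>v c \<in> carrier_vec (k - 1)" by (rule mult_mat_vec_carrier[OF c1(2) c])
      have v2: "(Sft (k - 1) * Rblk (k - 1)) *\<^sub>v c \<in> carrier_vec (k - 1)" by (rule mult_mat_vec_carrier[OF c1(4) c])
      show "((Rblk k * Sft k) *\<^sub>v c - (Sft (k - 1) * Rblk (k - 1)) *\<^sub>v c) $ i = 0"
        using 1 2 i v1 v2 by simp
    qed
  } note B = this
  show "eqv (Zs (k - 1)) (Lblk k * Sft k :: 'a::field mat) (Sft (k - 1) * Lblk (k - 1))"
    unfolding eqv_def using A c1 by auto
  show "eqv (Zs (k - 1)) (Rblk k * Sft k :: 'a::field mat) (Sft (k - 1) * Rblk (k - 1))"
    unfolding eqv_def using B c1 by auto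
qed



lemma qdata_LRk:
  assumes k: "2 \<le> k"
  shows "qdata (k - 1) k (Lblk k :: 'a::field mat) (Rblk k) (Sft k) (Sft (k - 1)) (Lblk (k - 1)) (Rblk (k - 1))"
proof -
  have q2: "qb (Zs (k - 1) :: 'a vec set) (Sft (k - 1))" by (rule qb_Sft, insert k, simp)
  show ?thesis
  unfolding qdata_def kerS_R imS_LR[OF k]
  using qb_Sft[of k] q2 eqv_LR[OF k] k LR_carrier[of k] LR_carrier[of "k-1"] Sft_carrier[of k] Sft_carrier[of "k-1"]
  by auto
qed

lemma lincl0: "lincl 0 K \<Longrightarrow> (x::'a::field vec) \<in> carrier_vec 0 \<Longrightarrow> x \<in> K"
proof -
  assume K: "lincl 0 K" and x: "x \<in> carrier_vec 0"
  hence "x = 0\<^sub>v 0" by auto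
  thus ?thesis using linclD(2)[OF K] by simp
qed

lemma qdata_LR1: "qdata 0 1 (Lblk 1 :: 'a::field mat) (Rblk 1) (0\<^sub>m 1 0) (0\<^sub>m 0 0) (0\<^sub>m 0 0) (0\<^sub>m 0 0)"
proof -
  have c: "Lblk 1 \<in> carrier_mat 0 1" "Rblk 1 \<in> carrier_mat 0 1" using LR_carrier[of 1] by auto
  have W: "lincl 0 (imS (Lblk 1 :: 'a mat) (Rblk 1))" by (rule lincl_imS[OF c])
  have W0: "\<And>x. x \<in> carrier_vec 0 \<Longrightarrow> x \<in> imS (Lblk 1 :: 'a mat) (Rblk 1)" using lincl0[OF W] by blast
  have qU: "qb (kerS (Rblk 1 :: 'a mat)) (0\<^sub>m 1 0)" unfolding kerS_R qb_def Zs_def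
  proof (intro conjI ballI impI)
    fix c :: "'a vec" assume "c \<in> carrier_vec (dim_col (0\<^sub>m 1 0 :: 'a mat))"
    thus "c = 0\<^sub>v (dim_col (0\<^sub>m 1 0 :: 'a mat))" by auto
  next
    fix u :: "'a vec" assume u: "u \<in> carrier_vec (dim_row (0\<^sub>m 1 0 :: 'a mat))"
    have "0\<^sub>m 1 0 *\<^sub>v (0\<^sub>v 0 :: 'a vec) \<in> carrier_vec 1" by (rule mult_mat_vec_carrier, auto)
    hence "u - 0\<^sub>m 1 0 *\<^sub>v 0\<^sub>v 0 \<in> carrier_vec 1" using u by auto
    thus "\<exists>c\<in>carrier_vec (dim_col (0\<^sub>m 1 0 :: 'a mat)). u - 0\<^sub>m 1 0 *\<^sub>v c \<in> {x \<in> carrier_vec 1. \<forall>i. 0 < i \<and> i < 1 \<longrightarrow> x $ i = 0}"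
      by (intro bexI[of _ "0\<^sub>v 0"], auto)
  qed
  have qV: "qb (imS (Lblk 1 :: 'a mat) (Rblk 1)) (0\<^sub>m 0 0)" unfolding qb_def
  proof (intro conjI ballI impI)
    fix c :: "'a vec" assume "c \<in> carrier_vec (dim_col (0\<^sub>m 0 0 :: 'a mat))"
    thus "c = 0\<^sub>v (dim_col (0\<^sub>m 0 0 :: 'a mat))" by auto
  next
    fix u :: "'a vec" assume u: "u \<in> carrier_vec (dim_row (0\<^sub>m 0 0 :: 'a mat))"
    have "0\<^sub>m 0 0 *\<^sub>v (0\<^sub>v 0 :: 'a vec) \<in> carrier_vec 0" by (rule mult_mat_vec_carrier, auto)
    hence "u - 0\<^sub>m 0 0 *\<^sub>v 0\<^sub>v 0 \<in> carrier_vec 0" using u by auto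
    thus "\<exists>c\<in>carrier_vec (dim_col (0\<^sub>m 0 0 :: 'a mat)). u - 0\<^sub>m 0 0 *\<^sub>v c \<in> imS (Lblk 1) (Rblk 1)"
      using W0 by (intro bexI[of _ "0\<^sub>v 0"], auto)
  qed
  have E: "\<And>X Y. X \<in> carrier_mat 0 0 \<Longrightarrow> Y \<in> carrier_mat 0 0 \<Longrightarrow> eqv (imS (Lblk 1 :: 'a mat) (Rblk 1)) X Y"
  proof -
    fix X Y :: "'a mat" assume X: "X \<in> carrier_mat 0 0" and Y: "Y \<in> carrier_mat 0 0"
    have "\<And>c. c \<in> carrier_vec 0 \<Longrightarrow> X *\<^sub>v c - Y *\<^sub>v c \<in> imS (Lblk 1 :: 'a mat) (Rblk 1)"
    proof -
      fix c :: "'a vec" assume c: "c \<in> carrier_vec 0"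
      have "X *\<^sub>v c \<in> carrier_vec 0" "Y *\<^sub>v c \<in> carrier_vec 0" using X Y c by auto
      hence "X *\<^sub>v c - Y *\<^sub>v c \<in> carrier_vec 0" by auto
      thus "X *\<^sub>v c - Y *\<^sub>v c \<in> imS (Lblk 1 :: 'a mat) (Rblk 1)" by (rule W0)
    qed
    thus "eqv (imS (Lblk 1 :: 'a mat) (Rblk 1)) X Y" using X Y unfolding eqv_def by auto
  qed
  have e1: "eqv (imS (Lblk 1 :: 'a mat) (Rblk 1)) (Lblk 1 * 0\<^sub>m 1 0) (0\<^sub>m 0 0 * 0\<^sub>m 0 0)"
    by (rule E, insert c, auto)
  have e2: "eqv (imS (Lblk 1 :: 'a mat) (Rblk 1)) (Rblk 1 * 0\<^sub>m 1 0) (0\<^sub>m 0 0 * 0\<^sub>m 0 0)"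
    by (rule E, insert c, auto)
  show ?thesis unfolding qdata_def using c qU qV e1 e2 by auto
qed

lemma qdata_base:
  fixes D :: "'a::field mat"
  assumes D: "D \<in> carrier_mat r r" "invertible_mat D"
  shows "qdata r r (1\<^sub>m r) D (1\<^sub>m r) (1\<^sub>m r) (1\<^sub>m r) D"
proof -
  obtain Di where Di: "Di \<in> carrier_mat r r" "D * Di = 1\<^sub>m r" "Di * D = 1\<^sub>m r" using inv_obtain[OF D] by blast
  have K: "kerS D = {0\<^sub>v r}"
  proof (rule Set.set_eqI)
    fix x :: "'a vec"
    show "x \<in> kerS D \<longleftrightarrow> x \<in> {0\<^sub>v r}"
    proof
      assume "x \<in> kerS D"
      hence x: "x \<in> carrier_vec r" "D *\<^sub>v x = 0\<^sub>v r" using D unfolding kerS_def by auto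
      have "x = Di *\<^sub>v (D *\<^sub>v x)" using inv_vec[OF Di(1) D(1) Di(3) x(1)] by simp
      also have "\<dots> = 0\<^sub>v r" using x(2) mat_mult_zero_vec[OF Di(1)] by simp
      finally show "x \<in> {0\<^sub>v r}" by simp
    next
      assume "x \<in> {0\<^sub>v r}"
      thus "x \<in> kerS D" using D mat_mult_zero_vec[OF D(1)] unfolding kerS_def by auto
    qed
  qed
  have I: "imS (1\<^sub>m r) D = {0\<^sub>v r}" unfolding imS_def K by auto
  have q: "qb {0\<^sub>v r} (1\<^sub>m r :: 'a mat)" unfolding qb_def
  proof (intro conjI ballI impI)
    fix c :: "'a vec" assume "c \<in> carrier_vec (dim_col (1\<^sub>m r :: 'a mat))" "1\<^sub>m r *\<^sub>v c \<in> {0\<^sub>v r}"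
    thus "c = 0\<^sub>v (dim_col (1\<^sub>m r :: 'a mat))" by auto
  next
    fix u :: "'a vec" assume u: "u \<in> carrier_vec (dim_row (1\<^sub>m r :: 'a mat))"
    hence u': "u \<in> carrier_vec r" by simp
    have "u - 1\<^sub>m r *\<^sub>v u = 0\<^sub>v r" using u' by (intro eq_vecI, auto)
    thus "\<exists>c\<in>carrier_vec (dim_col (1\<^sub>m r :: 'a mat)). u - 1\<^sub>m r *\<^sub>v c \<in> {0\<^sub>v r}" using u' by (intro bexI[of _ u], auto)
  qed
  have W: "lincl r {0\<^sub>v r :: 'a vec}" using lincl_imS[OF one_carrier_mat D(1)] unfolding I .
  have e1: "eqv {0\<^sub>v r} (1\<^sub>m r * 1\<^sub>m r) (1\<^sub>m r * (1\<^sub>m r :: 'a mat))" by (rule eqv_refl[OF W], auto)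
  have "eqv {0\<^sub>v r} D D" by (rule eqv_refl[OF W D(1)])
  hence e2: "eqv {0\<^sub>v r} (D * 1\<^sub>m r) (1\<^sub>m r * D)" using D by simp
  show ?thesis unfolding qdata_def K I using D e1 e2 q by auto
qed

lemma dsum_zero: "(M::'a::field mat) \<in> carrier_mat a b \<Longrightarrow> dsum M (0\<^sub>m 0 0) = M"
  unfolding dsum_def by (rule eq_matI, auto)

definition sh :: "blk list \<Rightarrow> blk list" where
  "sh bs = map shrink_blk (filter (\<lambda>b. b \<noteq> LR 1) bs)"

lemma sh_snoc1: "sh (bs @ [LR 1]) = sh bs" by (simp add: sh_def)
lemma sh_snoc: "k \<noteq> 1 \<Longrightarrow> sh (bs @ [LR k]) = sh bs @ [LR (k - 1)]" by (simp add: sh_def)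

lemma canon:
  fixes D :: "'a::field mat"
  assumes D: "D \<in> carrier_mat r r" "invertible_mat D"
  shows "\<forall>b\<in>set bs. \<exists>k\<ge>1. b = LR k \<Longrightarrow> \<exists>U0 V0. qdata (r + sum_list (map brow bs)) (r + sum_list (map bcol bs))
     (fst (decomp_pair r D bs)) (snd (decomp_pair r D bs)) U0 V0 (fst (decomp_pair r D (sh bs))) (snd (decomp_pair r D (sh bs)))"
proof (induction bs rule: rev_induct)
  case Nil
  show ?case using qdata_base[OF D] by (auto simp: decomp_nil sh_def)
next
  case (snoc b bs)
  obtain k where b: "b = LR k" "1 \<le> k" using snoc.prems by auto
  obtain U0 V0 where IH: "qdata (r + sum_list (map brow bs)) (r + sum_list (map bcol bs))
     (fst (decomp_pair r D bs)) (snd (decomp_pair r D bs)) U0 V0 (fst (decomp_pair r D (sh bs))) (snd (decomp_pair r D (sh bs)))"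
    using snoc.IH snoc.prems by auto
  have 1: "fst (decomp_pair r D (bs @ [b])) = dsum (fst (decomp_pair r D bs)) (Lblk k)"
    "snd (decomp_pair r D (bs @ [b])) = dsum (snd (decomp_pair r D bs)) (Rblk k)"
    by (simp_all add: decomp_snoc dsum_pair_def b)
  have c2: "fst (decomp_pair r D (sh bs)) \<in> carrier_mat (r + sum_list (map brow (sh bs))) (r + sum_list (map bcol (sh bs)))"
    "snd (decomp_pair r D (sh bs)) \<in> carrier_mat (r + sum_list (map brow (sh bs))) (r + sum_list (map bcol (sh bs)))"
    using decomp_carrier[OF D(1), of "sh bs"] by auto
  show ?case
  proof (cases "k = 1")
    case True
    have q: "qdata (r + sum_list (map brow bs) + 0) (r + sum_list (map bcol bs) + 1)
      (dsum (fst (decomp_pair r D bs)) (Lblk 1)) (dsum (snd (decomp_pair r D bs)) (Rblk 1))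
      (dsum U0 (0\<^sub>m 1 0)) (dsum V0 (0\<^sub>m 0 0)) (dsum (fst (decomp_pair r D (sh bs))) (0\<^sub>m 0 0)) (dsum (snd (decomp_pair r D (sh bs))) (0\<^sub>m 0 0))"
      by (rule qdata_dsum[OF IH qdata_LR1])
    hence "qdata (r + sum_list (map brow (bs @ [b]))) (r + sum_list (map bcol (bs @ [b])))
      (fst (decomp_pair r D (bs @ [b]))) (snd (decomp_pair r D (bs @ [b])))
      (dsum U0 (0\<^sub>m 1 0)) (dsum V0 (0\<^sub>m 0 0)) (fst (decomp_pair r D (sh (bs @ [b])))) (snd (decomp_pair r D (sh (bs @ [b]))))"
      unfolding 1 using True b dsum_zero[OF c2(1)] dsum_zero[OF c2(2)] sh_snoc1[of bs] by (simp add: add.assoc)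
    thus ?thesis by blast
  next
    case False
    hence k2: "2 \<le> k" using b by simp
    have q: "qdata (r + sum_list (map brow bs) + (k - 1)) (r + sum_list (map bcol bs) + k)
      (dsum (fst (decomp_pair r D bs)) (Lblk k)) (dsum (snd (decomp_pair r D bs)) (Rblk k))
      (dsum U0 (Sft k)) (dsum V0 (Sft (k - 1))) (dsum (fst (decomp_pair r D (sh bs))) (Lblk (k - 1))) (dsum (snd (decomp_pair r D (sh bs))) (Rblk (k - 1)))"
      by (rule qdata_dsum[OF IH qdata_LRk[OF k2]])
    have 2: "fst (decomp_pair r D (sh (bs @ [b]))) = dsum (fst (decomp_pair r D (sh bs))) (Lblk (k - 1))"
      "snd (decomp_pair r D (sh (bs @ [b]))) = dsum (snd (decomp_pair r D (sh bs))) (Rblk (k - 1))"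
      using sh_snoc[OF False, of bs] b by (simp_all add: decomp_snoc dsum_pair_def)
    have "qdata (r + sum_list (map brow (bs @ [b]))) (r + sum_list (map bcol (bs @ [b])))
      (fst (decomp_pair r D (bs @ [b]))) (snd (decomp_pair r D (bs @ [b])))
      (dsum U0 (Sft k)) (dsum V0 (Sft (k - 1))) (fst (decomp_pair r D (sh (bs @ [b])))) (snd (decomp_pair r D (sh (bs @ [b]))))"
      unfolding 1 2 using q b by (simp add: add.assoc)
    thus ?thesis by blast
  qed
qed



lemma count_arith:
  "\<forall>b\<in>set bs. \<exists>k\<ge>1. b = LR k \<Longrightarrow>
   int (count_list bs (LR 1)) = int (sum_list (map bcol bs)) - 2 * int (sum_list (map bcol (sh bs))) + int (sum_list (map brow (sh bs)))"
proof (induction bs)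
  case Nil thus ?case by (simp add: sh_def)
next
  case (Cons b bs)
  obtain k where b: "b = LR k" "1 \<le> k" using Cons.prems by auto
  have IH: "int (count_list bs (LR 1)) = int (sum_list (map bcol bs)) - 2 * int (sum_list (map bcol (sh bs))) + int (sum_list (map brow (sh bs)))"
    using Cons by auto
  show ?case
  proof (cases "k = 1")
    case True
    have "sh (b # bs) = sh bs" using True b by (simp add: sh_def)
    thus ?thesis using IH True b by simp
  next
    case False
    have "sh (b # bs) = LR (k - 1) # sh bs" using False b by (simp add: sh_def)
    thus ?thesis using IH False b by (simp add: of_nat_diff)
  qed
qed

lemma surj_transfer:
  fixes A A' :: "'a::field mat"
  assumes s: "surj_mat A" and A: "A \<in> carrier_mat m n" and A': "A' \<in> carrier_mat m n"
    and S: "S \<in> carrier_mat m m" "invertible_mat S" and R: "R \<in> carrier_mat n n"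
    and SA: "S * A = A' * R"
  shows "surj_mat A'"
  unfolding surj_mat_def
proof
  fix y :: "'a vec" assume y: "y \<in> carrier_vec (dim_row A')"
  hence y': "y \<in> carrier_vec m" using A' by simp
  obtain Si where Si: "Si \<in> carrier_mat m m" "S * Si = 1\<^sub>m m" "Si * S = 1\<^sub>m m" using inv_obtain[OF S] by blast
  have "Si *\<^sub>v y \<in> carrier_vec (dim_row A)" using Si y' A by auto
  then obtain x where x: "x \<in> carrier_vec n" "A *\<^sub>v x = Si *\<^sub>v y" using s A unfolding surj_mat_def by auto
  have "A' *\<^sub>v (R *\<^sub>v x) = (A' * R) *\<^sub>v x" using A' R x by auto
  also have "\<dots> = (S * A) *\<^sub>v x" using SA by simp
  also have "\<dots> = S *\<^sub>v (A *\<^sub>v x)" using S A x by auto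
  also have "\<dots> = y" using x(2) inv_vec[OF S(1) Si(1) Si(2) y'] by simp
  finally show "\<exists>x\<in>carrier_vec (dim_col A'). A' *\<^sub>v x = y" using R x A' by (intro bexI[of _ "R *\<^sub>v x"], auto)
qed

lemma qb_pre:
  fixes B :: "'a::field mat"
  assumes B: "B \<in> carrier_mat m n" and s: "surj_mat B" and q: "qb (preS B W) Wm" and Wm: "Wm \<in> carrier_mat n k"
    and Wl: "lincl m W"
  shows "qb W (B * Wm)"
  unfolding qb_def
proof (intro conjI ballI impI)
  have q1: "\<forall>c\<in>carrier_vec (dim_col Wm). Wm *\<^sub>v c \<in> preS B W \<longrightarrow> c = 0\<^sub>v (dim_col Wm)" using q unfolding qb_def by (rule conjunct1)
  fix c :: "'a vec" assume c: "c \<in> carrier_vec (dim_col (B * Wm))" and inW: "(B * Wm) *\<^sub>v c \<in> W"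
  have c': "c \<in> carrier_vec k" using c Wm by simp
  have "B *\<^sub>v (Wm *\<^sub>v c) \<in> W" using inW B Wm c' by auto
  hence "Wm *\<^sub>v c \<in> preS B W" using B Wm c' unfolding preS_def by auto
  hence "c = 0\<^sub>v (dim_col Wm)" using q1 c' Wm by auto
  thus "c = 0\<^sub>v (dim_col (B * Wm))" by simp
next
  have q2: "\<forall>u\<in>carrier_vec (dim_row Wm). \<exists>c\<in>carrier_vec (dim_col Wm). u - Wm *\<^sub>v c \<in> preS B W" using q unfolding qb_def by (rule conjunct2)
  fix v :: "'a vec" assume v: "v \<in> carrier_vec (dim_row (B * Wm))"
  hence v': "v \<in> carrier_vec (dim_row B)" by simp
  obtain x where x: "x \<in> carrier_vec n" "B *\<^sub>v x = v" using s v' B unfolding surj_mat_def by auto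
  obtain c where c: "c \<in> carrier_vec k" "x - Wm *\<^sub>v c \<in> preS B W" using bspec[OF q2, of x] x Wm by auto
  have "B *\<^sub>v (x - Wm *\<^sub>v c) = B *\<^sub>v x - B *\<^sub>v (Wm *\<^sub>v c)"
    by (rule mult_minus_distrib_mat_vec[OF B], insert x Wm c, auto)
  also have "\<dots> = v - (B * Wm) *\<^sub>v c" using x B Wm c by auto
  finally have "v - (B * Wm) *\<^sub>v c \<in> W" using c(2) unfolding preS_def by auto
  thus "\<exists>c\<in>carrier_vec (dim_col (B * Wm)). v - (B * Wm) *\<^sub>v c \<in> W" using c Wm by auto
qed

theorem lemma3:
  fixes A1 B1 A2 B2 D :: "'a::field mat"
    and m n r :: nat and us vs ws :: "'a vec list" and bs :: "blk list"
  defines "K1 \<equiv> {x \<in> carrier_vec n. B1 *\<^sub>v x = 0\<^sub>v m}"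
  defines "W \<equiv> (\<lambda>x. A1 *\<^sub>v x) ` K1"
  defines "K2 \<equiv> {x \<in> carrier_vec n. B1 *\<^sub>v x \<in> W}"
  assumes A1: "A1 \<in> carrier_mat m n" and B1: "B1 \<in> carrier_mat m n"
    and surjA: "surj_mat A1" and surjB: "surj_mat B1"
    and U2: "qbasis n K1 us" and V2: "qbasis m W vs"
    and A2: "induced_mat m A1 W us vs A2" and B2: "induced_mat m B1 W us vs B2"
    and U3: "qbasis n K2 ws"
    and dec: "reg_decomp A1 B1 r D bs"
  shows "reg_decomp A2 B2 r D (map shrink_blk (filter (\<lambda>b. b \<noteq> LR 1) bs))
       \<and> int (count_list bs (LR 1)) = int n - 2 * int (length us) + int (length ws)"
proof -
  have K1: "K1 = kerS B1" unfolding K1_def kerS_def using B1 by auto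
  have Wd: "W = imS A1 B1" unfolding W_def imS_def K1 ..
  have K2: "K2 = preS B1 W" unfolding K2_def preS_def using B1 by auto
  define A' where "A' = fst (decomp_pair r D bs)"
  define B' where "B' = snd (decomp_pair r D bs)"
  from dec have D: "D \<in> carrier_mat r r" "invertible_mat D" and sz: "\<forall>b\<in>set bs. 1 \<le> blk_size b"
    and pe: "pair_equiv A1 B1 A' B'" unfolding reg_decomp_def A'_def B'_def by auto
  from pe A1 obtain S R where A': "A' \<in> carrier_mat m n" and B': "B' \<in> carrier_mat m n"
    and S: "S \<in> carrier_mat m m" "invertible_mat S" and R: "R \<in> carrier_mat n n" "invertible_mat R"
    and SA: "S * A1 = A' * R" and SB: "S * B1 = B' * R" unfolding pair_equiv_def by auto
  have sA': "surj_mat A'" by (rule surj_transfer[OF surjA A1 A' S R(1) SA])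
  have sB': "surj_mat B'" by (rule surj_transfer[OF surjB B1 B' S R(1) SB])
  have allLR: "\<forall>b\<in>set bs. \<exists>k. b = LR k" using surj_allLR[OF D(1) sz] sA' sB' unfolding A'_def B'_def by auto
  have allLR1: "\<forall>b\<in>set bs. \<exists>k\<ge>1. b = LR k" using allLR sz by fastforce
  have dc: "A' \<in> carrier_mat (r + sum_list (map brow bs)) (r + sum_list (map bcol bs))"
    using decomp_carrier[OF D(1), of bs] unfolding A'_def by auto
  have mdim: "m = r + sum_list (map brow bs)" "n = r + sum_list (map bcol bs)" using dc A' by auto
  obtain U0 V0 where c0: "qdata m n A' B' U0 V0 (fst (decomp_pair r D (sh bs))) (snd (decomp_pair r D (sh bs)))"
    using canon[OF D allLR1] unfolding A'_def B'_def mdim by blast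
  have us: "set us \<subseteq> carrier_vec n" using U2 unfolding qbasis_def by auto
  have vs: "set vs \<subseteq> carrier_vec m" using V2 unfolding qbasis_def by auto
  have Wl: "lincl m W" unfolding Wd by (rule lincl_imS[OF A1 B1])
  have A2c: "A2 \<in> carrier_mat (length vs) (length us)" using A2 unfolding induced_mat_def by auto
  have B2c: "B2 \<in> carrier_mat (length vs) (length us)" using B2 unfolding induced_mat_def by auto
  have d1: "qdata m n A1 B1 (mat_of_cols n us) (mat_of_cols m vs) A2 B2"
    unfolding qdata_def
    using A1 B1 A2c B2c qbasis_qb[OF U2] qbasis_qb[OF V2] induced_eqv[OF Wl A1 us vs A2] induced_eqv[OF Wl B1 us vs B2]
    unfolding K1 Wd by auto
  have d2: "qdata m n A' B' (R * mat_of_cols n us) (S * mat_of_cols m vs) A2 B2"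
    by (rule qdata_transfer[OF d1 S R A' B' SA SB])
  have pe2: "pair_equiv A2 B2 (fst (decomp_pair r D (sh bs))) (snd (decomp_pair r D (sh bs)))"
    by (rule qdata_compare[OF d2 c0])
  have szsh: "\<forall>b\<in>set (sh bs). 1 \<le> blk_size b"
  proof
    fix b assume "b \<in> set (sh bs)"
    then obtain b0 where b0: "b0 \<in> set bs" "b0 \<noteq> LR 1" "b = shrink_blk b0" unfolding sh_def by auto
    then obtain k where "b0 = LR k" "1 \<le> k" using allLR1 by auto
    thus "1 \<le> blk_size b" using b0 by auto
  qed
  have part1: "reg_decomp A2 B2 r D (map shrink_blk (filter (\<lambda>b. b \<noteq> LR 1) bs))"
    unfolding reg_decomp_def using D szsh pe2 unfolding sh_def by auto
  have dc2: "fst (decomp_pair r D (sh bs)) \<in> carrier_mat (r + sum_list (map brow (sh bs))) (r + sum_list (map bcol (sh bs)))"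
    using decomp_carrier[OF D(1), of "sh bs"] by auto
  have "fst (decomp_pair r D (sh bs)) \<in> carrier_mat (length vs) (length us)" using pe2 A2c unfolding pair_equiv_def by auto
  hence ldim: "length vs = r + sum_list (map brow (sh bs))" "length us = r + sum_list (map bcol (sh bs))" using dc2 by auto
  have ws: "set ws \<subseteq> carrier_vec n" using U3 unfolding qbasis_def by auto
  have qW: "qb (preS B1 W) (mat_of_cols n ws)" using qbasis_qb[OF U3] unfolding K2 .
  have qBW: "qb W (B1 * mat_of_cols n ws)" by (rule qb_pre[OF B1 surjB qW mat_of_cols_carrier(1) Wl])
  have qV: "qb W (mat_of_cols m vs)" using qbasis_qb[OF V2] .
  have "length ws = length vs"
    using G_change[OF Wl qBW qV _ mat_of_cols_carrier(1)] B1 by auto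
  hence "int (count_list bs (LR 1)) = int n - 2 * int (length us) + int (length ws)"
    using count_arith[OF allLR1] ldim mdim by simp
  thus ?thesis using part1 by simp
qed

end
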